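(* Let $\Xi\subset\mathbb R$ be a parameter set, let $\xi\mapsto H_\xi$ be a differentiable family of $d\times d$ Hermitian matrices with non-degenerate spectrum, fix a time $t$, and let $U_t=\exp(-itH_\xi)$. Then for every $\xi$, $$\mathcal G_\xi\le\big(\sigma[\mathfrak g_{U,\xi}]+\sigma[\mathfrak g_{S,\xi}]\big)^2,$$ where $\mathfrak g_{U,\xi}=i(\partial_\xi U_t)U_t^\dagger$ and $\mathfrak g_{S,\xi}=i(\partial_\xi S_\xi)S_\xi^\dagger$.
   Context: For a Hermitian matrix $M$ with eigenvalues $\lambda_1(M)\ge\dots\ge\lambda_d(M)$, the spectral gap is $\sigma(M):=\lambda_1(M)-\lambda_d(M)$. Let $\{|0\rangle,\dots,|d-1\rangle\}$ be the computational basis of $\mathbb C^d$, $P_j=|j\rangle\langle j|$. Let $E_{j,\xi}:=\lambda_{d-j}(H_\xi)$ ($j=0,\dots,d-1$) be the eigenvalues of $H_\xi$ with normalized eigenvectors $|E_{j,\xi}\rangle$, chosen to depend differentiably on $\xi$, and $P_{E_{j,\xi}}=|E_{j,\xi}\rangle\langle E_{j,\xi}|$. Let $S_\xi$ be the unitary with $S_\xi|E_{j,\xi}\rangle=|j\rangle$ for all $j$ (i.e. $\langle j|S_\xi|k\rangle=\langle E_{j,\xi}|k\rangle$). For a density matrix $\rho_0$ on $\mathbb C^d$, set $\rho_\xi=U_t\rho_0U_t^\dagger$. For a unitary $V\in U(d)$ (independent of $\xi$), the controlled energy measurement $\mathscr M_{V,\xi}$ is the POVM with elements $V^\dagger P_{E_{j,\xi}}V$,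 $j=0,\dots,d-1$; it yields outcome $j$ with probability $p_{j,\xi}=\mathrm{tr}[\rho_\xi V^\dagger P_{E_{j,\xi}}V]$. Its Fisher information is $\mathcal F_\xi(\rho_0,\mathscr M_{V,\xi})=\sum_{j}p_{j,\xi}(\partial_\xi\ln p_{j,\xi})^2$ (sum over $j$ with $p_{j,\xi}>0$). The quantity $\mathcal G_\xi$ is defined as $\mathcal G_\xi=\max_{\rho_0}\max_{V\in U(d)}\mathcal F_\xi(\rho_0,\mathscr M_{V,\xi})$, the maximum over all density matrices $\rho_0$ and all unitary controls $V$. *)

theory Defs
  imports "HOL-Analysis.Derivative" "Jordan_Normal_Form.Char_Poly" "Jordan_Normal_Form.Conjugate"
begin

(* All matrices are d x d complex matrices (Jordan_Normal_Form 'a mat), indices 0..d-1;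
   the computational basis vector |j> is the j-th unit vector. *)

definition adj :: "complex mat \<Rightarrow> complex mat" where
  "adj A = mat (dim_col A) (dim_row A) (\<lambda>(i,j). cnj (A $$ (j,i)))"

definition mtrace :: "complex mat \<Rightarrow> complex" where
  "mtrace A = (\<Sum>i<dim_row A. A $$ (i,i))"

definition hermitian_mat :: "nat \<Rightarrow> complex mat \<Rightarrow> bool" where
  "hermitian_mat d A \<longleftrightarrow> A \<in> carrier_mat d d \<and> adj A = A"

definition unitary_mat :: "nat \<Rightarrow> complex mat \<Rightarrow> bool" where
  "unitary_mat d V \<longleftrightarrow> V \<in> carrier_mat d d \<and> adj V * V = 1\<^sub>m d \<and> V * adj V = 1\<^sub>m d"

definition density_mat :: "nat \<Rightarrow> complex mat \<Rightarrow> bool" where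
  "density_mat d \<rho> \<longleftrightarrow> hermitian_mat d \<rho>
     \<and> (\<forall>v \<in> carrier_vec d. 0 \<le> Re ((\<rho> *\<^sub>v v) \<bullet>c v))
     \<and> mtrace \<rho> = 1"

(* spectral gap lambda_1(M) - lambda_d(M) of a Hermitian matrix (its eigenvalues are real) *)
definition spectral_gap :: "complex mat \<Rightarrow> real" where
  "spectral_gap M = Max (Re ` {k. eigenvalue M k}) - Min (Re ` {k. eigenvalue M k})"

definition mat_exp :: "complex mat \<Rightarrow> complex mat" where
  "mat_exp A = mat (dim_row A) (dim_col A)
     (\<lambda>(i,j). \<Sum>k. (A ^\<^sub>m k) $$ (i,j) / of_nat (fact k))"

definition mderiv :: "nat \<Rightarrow> (real \<Rightarrow> complex mat) \<Rightarrow> real \<Rightarrow> complex mat" where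
  "mderiv d F x = mat d d (\<lambda>(i,j). vector_derivative (\<lambda>y. F y $$ (i,j)) (at x))"

definition proj :: "nat \<Rightarrow> complex vec \<Rightarrow> complex mat" where
  "proj d v = mat d d (\<lambda>(i,j). v $ i * cnj (v $ j))"

definition evol :: "(real \<Rightarrow> complex mat) \<Rightarrow> real \<Rightarrow> real \<Rightarrow> complex mat" where
  "evol H t x = mat_exp ((- (\<i> * of_real t)) \<cdot>\<^sub>m H x)"

(* S_xi with <j|S_xi|k> = <E_{j,xi}|k> = conj of k-th component of the j-th eigenvector *)
definition Smat :: "nat \<Rightarrow> (nat \<Rightarrow> real \<Rightarrow> complex vec) \<Rightarrow> real \<Rightarrow> complex mat" where
  "Smat d e x = mat d d (\<lambda>(j,k). cnj (e j x $ k))"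

definition gU :: "nat \<Rightarrow> (real \<Rightarrow> complex mat) \<Rightarrow> real \<Rightarrow> real \<Rightarrow> complex mat" where
  "gU d H t x = \<i> \<cdot>\<^sub>m (mderiv d (evol H t) x * adj (evol H t x))"

definition gS :: "nat \<Rightarrow> (nat \<Rightarrow> real \<Rightarrow> complex vec) \<Rightarrow> real \<Rightarrow> complex mat" where
  "gS d e x = \<i> \<cdot>\<^sub>m (mderiv d (Smat d e) x * adj (Smat d e x))"

definition outcome_prob :: "nat \<Rightarrow> (real \<Rightarrow> complex mat) \<Rightarrow> (nat \<Rightarrow> real \<Rightarrow> complex vec)
    \<Rightarrow> real \<Rightarrow> complex mat \<Rightarrow> complex mat \<Rightarrow> nat \<Rightarrow> real \<Rightarrow> real" where
  "outcome_prob d H e t \<rho>0 V j x =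
     Re (mtrace (evol H t x * \<rho>0 * adj (evol H t x) * adj V * proj d (e j x) * V))"

definition fisher_info :: "nat \<Rightarrow> (real \<Rightarrow> complex mat) \<Rightarrow> (nat \<Rightarrow> real \<Rightarrow> complex vec)
    \<Rightarrow> real \<Rightarrow> complex mat \<Rightarrow> complex mat \<Rightarrow> real \<Rightarrow> real" where
  "fisher_info d H e t \<rho>0 V x =
     (\<Sum>j \<in> {j. j < d \<and> 0 < outcome_prob d H e t \<rho>0 V j x}.
        outcome_prob d H e t \<rho>0 V j x
        * (deriv (\<lambda>y. ln (outcome_prob d H e t \<rho>0 V j y)) x)^2)"

end

theory Submission
  imports Defs
begin

unbundle no vec_syntax

lemma adj_dims[simp]: "dim_row (adj A) = dim_col A" "dim_col (adj A) = dim_row A"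
  unfolding adj_def by simp_all

lemma index_adj[simp]: "i < dim_col A \<Longrightarrow> j < dim_row A \<Longrightarrow> adj A $$ (i,j) = cnj (A $$ (j,i))"
  unfolding adj_def by simp

lemma adj_carrier[simp]: "A \<in> carrier_mat n m \<Longrightarrow> adj A \<in> carrier_mat m n"
  by (metis adj_dims carrier_matD carrier_matI)

lemma cs_sum: "(w::complex vec) \<in> carrier_vec d \<Longrightarrow> v \<bullet>c w = (\<Sum>i<d. v$i * cnj (w$i))"
  unfolding scalar_prod_def by (simp add: atLeast0LessThan)

lemma mv_sum: "(A::complex mat) \<in> carrier_mat d n \<Longrightarrow> v \<in> carrier_vec n \<Longrightarrow> i < d \<Longrightarrow>
   (A *\<^sub>v v) $ i = (\<Sum>j<n. A $$ (i,j) * v $ j)"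
  by (simp add: scalar_prod_def atLeast0LessThan)

lemma mm_sum: "(A::complex mat) \<in> carrier_mat d n \<Longrightarrow> B \<in> carrier_mat n m \<Longrightarrow> i < d \<Longrightarrow> j < m \<Longrightarrow>
   (A * B) $$ (i,j) = (\<Sum>k<n. A $$ (i,k) * B $$ (k,j))"
  by (simp add: scalar_prod_def atLeast0LessThan)

lemma cs_conj: "(v::complex vec) \<in> carrier_vec d \<Longrightarrow> w \<in> carrier_vec d \<Longrightarrow> v \<bullet>c w = cnj (w \<bullet>c v)"
  by (simp add: cs_sum mult.commute)

lemma cs_self: "(v::complex vec) \<in> carrier_vec d \<Longrightarrow> v \<bullet>c v = of_real (\<Sum>i<d. (cmod (v$i))^2)"
proof -
  assume v: "v \<in> carrier_vec d"
  have e: "\<And>i. v$i * cnj (v$i) = of_real ((cmod (v$i))^2)" using complex_norm_square by metis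
  show ?thesis unfolding cs_sum[OF v] of_real_sum e ..
qed

lemma vec_nonzero_pos:
  assumes "(v::complex vec) \<in> carrier_vec d" "v \<noteq> 0\<^sub>v d"
  shows "(\<Sum>i<d. (cmod (v$i))^2) > 0"
proof -
  obtain i where i: "i < d" "v $ i \<noteq> 0" using assms by (metis carrier_vecD eq_vecI index_zero_vec(1,2))
  have "(cmod (v$i))^2 \<le> (\<Sum>i<d. (cmod (v$i))^2)"
    by (rule member_le_sum) (use i in auto)
  moreover have "(cmod (v$i))^2 > 0" using i by simp
  ultimately show ?thesis by linarith
qed

definition onb :: "nat \<Rightarrow> (nat \<Rightarrow> complex vec) \<Rightarrow> bool" where
  "onb d u \<longleftrightarrow> (\<forall>k<d. u k \<in> carrier_vec d) \<and> (\<forall>j<d. \<forall>k<d. u j \<bullet>c u k = (if j = k then 1 else 0))"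

lemma onb_complete:
  fixes u :: "nat \<Rightarrow> complex vec"
  assumes "onb d u" "a < d" "b < d"
  shows "(\<Sum>k<d. u k $ a * cnj (u k $ b)) = (if a = b then 1 else 0)"
proof -
  define M where "M = mat d d (\<lambda>(a,k). u k $ a)"
  have M: "M \<in> carrier_mat d d" by (simp add: M_def)
  have "adj M * M = 1\<^sub>m d"
  proof (rule eq_matI)
    fix j k assume jk: "j < dim_row (1\<^sub>m d)" "k < dim_col (1\<^sub>m d)"
    have "(adj M * M) $$ (j,k) = (\<Sum>a<d. adj M $$ (j,a) * M $$ (a,k))"
      using jk M by (intro mm_sum) auto
    also have "\<dots> = (\<Sum>a<d. cnj (u j $ a) * u k $ a)"
      using jk M by (intro sum.cong) (auto simp: M_def)
    also have "\<dots> = u k \<bullet>c u j"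
      using assms(1) jk cs_sum[of "u j" d "u k"] by (simp add: onb_def mult.commute)
    also have "\<dots> = 1\<^sub>m d $$ (j,k)" using assms(1) jk by (auto simp: onb_def)
    finally show "(adj M * M) $$ (j,k) = 1\<^sub>m d $$ (j,k)" .
  next show "dim_row (adj M * M) = dim_row (1\<^sub>m d)" using M by simp
  next show "dim_col (adj M * M) = dim_col (1\<^sub>m d)" using M by simp
  qed
  then have "M * adj M = 1\<^sub>m d"
    using mat_mult_left_right_inverse[OF adj_carrier[OF M] M] by blast
  then have "(M * adj M) $$ (a,b) = (if a = b then 1 else 0)" using assms(2,3) by simp
  moreover have "(M * adj M) $$ (a,b) = (\<Sum>k<d. u k $ a * cnj (u k $ b))"
  proof -
    have "(M * adj M) $$ (a,b) = (\<Sum>k<d. M $$ (a,k) * adj M $$ (k,b))"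
      using M assms(2,3) by (intro mm_sum) auto
    also have "\<dots> = (\<Sum>k<d. u k $ a * cnj (u k $ b))"
      using M assms(2,3) by (intro sum.cong) (auto simp: M_def)
    finally show ?thesis .
  qed
  ultimately show ?thesis by simp
qed

lemma onb_expand:
  fixes u :: "nat \<Rightarrow> complex vec"
  assumes "onb d u" "z \<in> carrier_vec d" "i < d"
  shows "z $ i = (\<Sum>l<d. (z \<bullet>c u l) * u l $ i)"
proof -
  have c: "\<And>l. l < d \<Longrightarrow> u l \<in> carrier_vec d" using assms(1) by (auto simp: onb_def)
  have "(\<Sum>l<d. (z \<bullet>c u l) * u l $ i) = (\<Sum>l<d. \<Sum>j<d. z $ j * (u l $ i * cnj (u l $ j)))"
  proof (intro sum.cong refl)
    fix l assume "l \<in> {..<d}"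
    then have "z \<bullet>c u l = (\<Sum>j<d. z $ j * cnj (u l $ j))" using c by (simp add: cs_sum)
    then show "(z \<bullet>c u l) * u l $ i = (\<Sum>j<d. z $ j * (u l $ i * cnj (u l $ j)))"
      by (simp add: sum_distrib_left sum_distrib_right mult_ac)
  qed
  also have "\<dots> = (\<Sum>j<d. z $ j * (\<Sum>l<d. u l $ i * cnj (u l $ j)))"
    by (subst sum.swap) (simp add: sum_distrib_left)
  also have "\<dots> = (\<Sum>j<d. z $ j * (if i = j then 1 else 0))"
    using onb_complete[OF assms(1) assms(3)] by (intro sum.cong) auto
  also have "\<dots> = z $ i" using assms(3) by (simp add: if_distrib cong: if_cong)
  finally show ?thesis by simp
qed

lemma ext_orth:
  fixes u :: "nat \<Rightarrow> complex vec"
  assumes k: "k < d" and u: "\<forall>i<k. u i \<in> carrier_vec d"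
  shows "\<exists>w \<in> carrier_vec d. w \<noteq> 0\<^sub>v d \<and> (\<forall>i<k. u i \<bullet>c w = 0)"
proof -
  define c where "c = (\<lambda>i. if i < k then vec d (\<lambda>j. cnj (u i $ j)) else 0\<^sub>v d)"
  define M where "M = mat\<^sub>r d d (\<lambda>i. if i = d - 1 then 0\<^sub>v d else c i)"
  have cc: "c \<in> {0..<d} \<rightarrow> carrier_vec d" unfolding c_def by auto
  have "det M = 0" unfolding M_def
    by (rule det_row_0[OF _ cc]) (use k in linarith)
  moreover have Mc: "M \<in> carrier_mat d d" unfolding M_def by (rule mat_row_carrierI)
  ultimately obtain v where v: "v \<in> carrier_vec d" "v \<noteq> 0\<^sub>v d" "M *\<^sub>v v = 0\<^sub>v d"
    using det_0_iff_vec_prod_zero[OF Mc] by blast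
  have "u i \<bullet>c v = 0" if i: "i < k" for i
  proof -
    have id: "i \<noteq> d - 1" "i < d" using i k by linarith+
    have "row M i = c i" unfolding M_def using id c_def by simp
    also have "c i = vec d (\<lambda>j. cnj (u i $ j))" using i c_def by simp
    finally have r: "row M i = vec d (\<lambda>j. cnj (u i $ j))" .
    have "(M *\<^sub>v v) $ i = 0" using v id by simp
    then have "row M i \<bullet> v = 0" using Mc id by simp
    then have "(\<Sum>j\<in>{0..<d}. cnj (u i $ j) * v $ j) = 0"
      unfolding r scalar_prod_def using v by simp
    then have "cnj (\<Sum>j<d. cnj (u i $ j) * v $ j) = 0" by (simp add: atLeast0LessThan)
    then show ?thesis using v by (simp add: cs_sum mult.commute)
  qed
  then show ?thesis using v by blast
qed

definition orthn :: "nat \<Rightarrow> nat \<Rightarrow> (nat \<Rightarrow> complex vec) \<Rightarrow> bool" where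
  "orthn d k u \<longleftrightarrow> (\<forall>i<k. u i \<in> carrier_vec d) \<and> (\<forall>i<k. \<forall>j<k. u i \<bullet>c u j = (if i = j then 1 else 0))"

lemma onb_orthn: "onb d u = orthn d d u" by (simp add: onb_def orthn_def)

lemma normalize_vec:
  assumes "(w::complex vec) \<in> carrier_vec d" "w \<noteq> 0\<^sub>v d"
  shows "\<exists>r::real. r > 0 \<and> (of_real r \<cdot>\<^sub>v w) \<bullet>c (of_real r \<cdot>\<^sub>v w) = 1"
proof -
  define s where "s = (\<Sum>i<d. (cmod (w$i))^2)"
  have s: "s > 0" using vec_nonzero_pos[OF assms] s_def by simp
  define r where "r = 1 / sqrt s"
  have r: "r > 0" using s by (simp add: r_def)
  have "(of_real r \<cdot>\<^sub>v w) \<bullet>c (of_real r \<cdot>\<^sub>v w) = of_real (r^2) * (w \<bullet>c w)"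
    using assms(1) by (simp add: cs_sum sum_distrib_left power2_eq_square mult_ac)
  also have "\<dots> = of_real (r^2 * s)" using cs_self[OF assms(1)] s_def by simp
  also have "r^2 * s = 1" using s by (simp add: r_def power_divide)
  finally show ?thesis using r by auto
qed

lemma orth_extend:
  assumes "k \<le> d" "orthn d k u"
  shows "\<exists>b. onb d b \<and> (\<forall>i<k. b i = u i)"
  using assms
proof (induction "d - k" arbitrary: k u)
  case 0
  then have "k = d" by simp
  then show ?case using 0 by (auto simp: onb_orthn)
next
  case (Suc m)
  then have kd: "k < d" by simp
  have uc: "\<forall>i<k. u i \<in> carrier_vec d" using Suc.prems by (simp add: orthn_def)
  obtain w where w: "w \<in> carrier_vec d" "w \<noteq> 0\<^sub>v d" "\<forall>i<k. u i \<bullet>c w = 0"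
    using ext_orth[OF kd uc] by blast
  obtain r where r: "r > 0" "(of_real r \<cdot>\<^sub>v w) \<bullet>c (of_real r \<cdot>\<^sub>v w) = 1"
    using normalize_vec[OF w(1,2)] by blast
  define w' where "w' = (of_real r \<cdot>\<^sub>v w :: complex vec)"
  have w'c: "w' \<in> carrier_vec d" using w(1) by (simp add: w'_def)
  have o1: "u i \<bullet>c w' = 0" if "i < k" for i
  proof -
    have "u i \<bullet>c w' = of_real r * (u i \<bullet>c w)"
      using w(1) uc that by (simp add: w'_def cs_sum sum_distrib_left mult_ac)
    then show ?thesis using w(3) that by simp
  qed
  have o2: "w' \<bullet>c u i = 0" if "i < k" for i
    using cs_conj[OF w'c, of "u i"] o1[OF that] uc that by simp
  define u' where "u' = u(k := w')"
  have "orthn d (Suc k) u'"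
    unfolding orthn_def
  proof (intro conjI allI impI)
    fix i assume "i < Suc k" then show "u' i \<in> carrier_vec d"
      using uc w'c by (auto simp: u'_def less_Suc_eq)
  next
    fix i j assume ij: "i < Suc k" "j < Suc k"
    show "u' i \<bullet>c u' j = (if i = j then 1 else 0)"
    proof (cases "i = k"; cases "j = k")
      assume "i = k" "j = k" then show ?thesis using r(2) by (simp add: u'_def w'_def)
    next
      assume "i = k" "j \<noteq> k" then show ?thesis using o2 ij by (simp add: u'_def)
    next
      assume "i \<noteq> k" "j = k" then show ?thesis using o1 ij by (simp add: u'_def)
    next
      assume "i \<noteq> k" "j \<noteq> k" then show ?thesis using Suc.prems ij by (simp add: u'_def orthn_def)
    qed
  qed
  moreover have "m = d - Suc k" using Suc.hyps by simp
  ultimately obtain b where "onb d b" "\<forall>i<Suc k. b i = u' i"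
    using Suc.hyps(1)[of "Suc k" u'] kd by auto
  then show ?case by (auto simp: u'_def)
qed

lemma sum_split_kd:
  fixes f :: "nat \<Rightarrow> 'a::comm_monoid_add"
  assumes "k \<le> d"
  shows "(\<Sum>l<d. f l) = (\<Sum>l<k. f l) + (\<Sum>p<d-k. f (k+p))"
proof -
  have "(\<Sum>l<d. f l) = (\<Sum>l\<in>{0..<k}. f l) + (\<Sum>l\<in>{k..<d}. f l)"
    using sum.atLeastLessThan_concat[of 0 k d f] assms by (simp add: atLeast0LessThan)
  moreover have "(\<Sum>l\<in>{k..<d}. f l) = (\<Sum>p<d-k. f (k+p))"
    using sum.shift_bounds_nat_ivl[of f 0 k "d-k"] assms by (simp add: atLeast0LessThan add.commute)
  ultimately show ?thesis by (simp add: atLeast0LessThan)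
qed

lemma row_dot_sum: "(A::complex mat) \<in> carrier_mat d n \<Longrightarrow> v \<in> carrier_vec n \<Longrightarrow> i < d \<Longrightarrow>
   row A i \<bullet> v = (\<Sum>j<n. A $$ (i,j) * v $ j)"
  by (simp add: scalar_prod_def atLeast0LessThan)

lemma herm_entry: "hermitian_mat d A \<Longrightarrow> i < d \<Longrightarrow> j < d \<Longrightarrow> cnj (A $$ (j,i)) = A $$ (i,j)"
  unfolding hermitian_mat_def by (metis carrier_matD index_adj)

lemma herm_cs:
  assumes h: "hermitian_mat d A" and v: "v \<in> carrier_vec d" and w: "w \<in> carrier_vec d"
  shows "(A *\<^sub>v v) \<bullet>c w = v \<bullet>c (A *\<^sub>v w)"
proof -
  have A: "A \<in> carrier_mat d d" using h by (simp add: hermitian_mat_def)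
  have "(A *\<^sub>v v) \<bullet>c w = (\<Sum>i<d. (\<Sum>j<d. A $$ (i,j) * v $ j) * cnj (w $ i))"
    using A v w by (simp add: cs_sum row_dot_sum)
  also have "\<dots> = (\<Sum>i<d. \<Sum>j<d. v $ j * (A $$ (i,j) * cnj (w $ i)))"
    by (simp add: sum_distrib_left sum_distrib_right mult_ac)
  also have "\<dots> = (\<Sum>j<d. \<Sum>i<d. v $ j * (cnj (A $$ (j,i)) * cnj (w $ i)))"
    by (subst sum.swap) (intro sum.cong refl, simp add: herm_entry[OF h])
  also have "\<dots> = (\<Sum>j<d. v $ j * cnj (\<Sum>i<d. A $$ (j,i) * w $ i))"
    by (simp add: sum_distrib_left)
  also have "\<dots> = v \<bullet>c (A *\<^sub>v w)"
  proof -
    have Aw: "A *\<^sub>v w \<in> carrier_vec d" using A w by simp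
    have "v \<bullet>c (A *\<^sub>v w) = (\<Sum>j<d. v$j * cnj ((A *\<^sub>v w)$j))" by (rule cs_sum[OF Aw])
    also have "\<dots> = (\<Sum>j<d. v $ j * cnj (\<Sum>i<d. A $$ (j,i) * w $ i))"
      using A w by (intro sum.cong refl) (simp add: row_dot_sum)
    finally show ?thesis by simp
  qed
  finally show ?thesis .
qed

lemma cs_smult_left: "(w::complex vec) \<in> carrier_vec d \<Longrightarrow> v \<in> carrier_vec d \<Longrightarrow> (c \<cdot>\<^sub>v v) \<bullet>c w = c * (v \<bullet>c w)"
  by (simp add: cs_sum sum_distrib_left mult_ac)

lemma cs_smult_right: "(w::complex vec) \<in> carrier_vec d \<Longrightarrow> v \<bullet>c (c \<cdot>\<^sub>v w) = cnj c * (v \<bullet>c w)"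
  by (simp add: cs_sum sum_distrib_left mult_ac)

definition lincomb :: "nat \<Rightarrow> nat \<Rightarrow> (nat \<Rightarrow> complex) \<Rightarrow> (nat \<Rightarrow> complex vec) \<Rightarrow> complex vec" where
  "lincomb d m c v = vec d (\<lambda>i. \<Sum>q<m. c q * v q $ i)"

lemma lincomb_carrier[simp]: "lincomb d m c v \<in> carrier_vec d"
  by (simp add: lincomb_def)

lemma lincomb_cs:
  assumes "w \<in> carrier_vec d"
  shows "lincomb d m c v \<bullet>c w = (\<Sum>q<m. c q * (v q \<bullet>c w))"
proof -
  have "lincomb d m c v \<bullet>c w = (\<Sum>i<d. (\<Sum>q<m. c q * v q $ i) * cnj (w $ i))"
    using assms by (simp add: cs_sum lincomb_def)
  also have "\<dots> = (\<Sum>q<m. c q * (\<Sum>i<d. v q $ i * cnj (w $ i)))"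
    by (simp add: sum_distrib_left sum_distrib_right mult_ac) (rule sum.swap)
  also have "\<dots> = (\<Sum>q<m. c q * (v q \<bullet>c w))"
    using assms by (simp add: cs_sum)
  finally show ?thesis .
qed

lemma mult_lincomb:
  assumes A: "A \<in> carrier_mat d d" and v: "\<forall>q<m. v q \<in> carrier_vec d"
  shows "A *\<^sub>v lincomb d m c v = lincomb d m c (\<lambda>q. A *\<^sub>v v q)"
proof (rule eq_vecI)
  show "dim_vec (A *\<^sub>v lincomb d m c v) = dim_vec (lincomb d m c (\<lambda>q. A *\<^sub>v v q))"
    using A by (simp add: lincomb_def)
  fix i assume "i < dim_vec (lincomb d m c (\<lambda>q. A *\<^sub>v v q))"
  then have i: "i < d" by (simp add: lincomb_def)
  have "(A *\<^sub>v lincomb d m c v) $ i = (\<Sum>j<d. A $$ (i,j) * (\<Sum>q<m. c q * v q $ j))"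
    using A i row_dot_sum[OF A lincomb_carrier i, of m c v] by (simp add: lincomb_def)
  also have "\<dots> = (\<Sum>q<m. c q * (\<Sum>j<d. A $$ (i,j) * v q $ j))"
    by (simp add: sum_distrib_left mult_ac) (rule sum.swap)
  also have "\<dots> = (\<Sum>q<m. c q * (A *\<^sub>v v q) $ i)"
  proof (intro sum.cong refl)
    fix q assume "q \<in> {..<m}"
    then have vq: "v q \<in> carrier_vec d" using v by simp
    show "c q * (\<Sum>j<d. A $$ (i,j) * v q $ j) = c q * (A *\<^sub>v v q) $ i"
      using A i vq by (simp add: row_dot_sum)
  qed
  also have "\<dots> = lincomb d m c (\<lambda>q. A *\<^sub>v v q) $ i" using i by (simp add: lincomb_def)
  finally show "(A *\<^sub>v lincomb d m c v) $ i = lincomb d m c (\<lambda>q. A *\<^sub>v v q) $ i" .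
qed

lemma sum_delta_mult: "p < m \<Longrightarrow> (\<Sum>q<m. (y::nat \<Rightarrow> complex) q * (if q = p then 1 else 0)) = y p"
proof -
  assume p: "p < m"
  have "(\<Sum>q<m. y q * (if q = p then 1 else 0)) = (\<Sum>q<m. if q = p then y q else 0)"
    by (intro sum.cong) auto
  also have "\<dots> = y p" using p by (simp add: sum.delta)
  finally show ?thesis .
qed

lemma eig_step:
  assumes herm: "hermitian_mat d A" and k: "k < d" and orth: "orthn d k u"
    and eig: "\<forall>i<k. A *\<^sub>v u i = complex_of_real (lam i) \<cdot>\<^sub>v u i"
  shows "\<exists>x \<mu>. x \<in> carrier_vec d \<and> A *\<^sub>v x = complex_of_real \<mu> \<cdot>\<^sub>v x \<and> x \<bullet>c x = 1 \<and> (\<forall>i<k. x \<bullet>c u i = 0)"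
proof -
  have A: "A \<in> carrier_mat d d" using herm by (simp add: hermitian_mat_def)
  obtain b where b: "onb d b" and bu: "\<forall>i<k. b i = u i"
    using orth_extend[of k d u] k orth by auto
  have bc: "\<And>l. l < d \<Longrightarrow> b l \<in> carrier_vec d" using b by (simp add: onb_def)
  have bo: "\<And>j l. j < d \<Longrightarrow> l < d \<Longrightarrow> b j \<bullet>c b l = (if j = l then 1 else 0)"
    using b by (simp add: onb_def)
  define m where "m = d - k"
  have m: "m > 0" "k + m = d" using k by (auto simp: m_def)
  define Ar where "Ar = mat m m (\<lambda>(p,q). (A *\<^sub>v b (k+q)) \<bullet>c b (k+p))"
  have Ar: "Ar \<in> carrier_mat m m" by (simp add: Ar_def)
  obtain as where as: "char_poly Ar = (\<Prod>a\<leftarrow>as. [:- a, 1:])" "length as = m"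
    using char_poly_factorized[OF Ar] by blast
  then obtain a rest where as2: "as = a # rest" using m by (cases as) auto
  have "poly (char_poly Ar) a = 0" using as(1) as2 by simp
  then have "eigenvalue Ar a" using eigenvalue_root_char_poly[OF Ar] by simp
  then obtain y where y: "y \<in> carrier_vec m" "y \<noteq> 0\<^sub>v m" "Ar *\<^sub>v y = a \<cdot>\<^sub>v y"
    unfolding eigenvalue_def eigenvector_def using Ar by auto
  define x0 where "x0 = lincomb d m (\<lambda>q. y $ q) (\<lambda>q. b (k+q))"
  have x0c: "x0 \<in> carrier_vec d" by (simp add: x0_def)
  have bkc: "\<forall>q<m. b (k+q) \<in> carrier_vec d" using bc m by auto
  have F1: "x0 \<bullet>c b l = (\<Sum>q<m. y $ q * (if k + q = l then 1 else 0))" if l: "l < d" for l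
  proof -
    have "x0 \<bullet>c b l = (\<Sum>q<m. y $ q * (b (k+q) \<bullet>c b l))"
      unfolding x0_def by (rule lincomb_cs[OF bc[OF l]])
    also have "\<dots> = (\<Sum>q<m. y $ q * (if k + q = l then 1 else 0))"
      using l m by (intro sum.cong refl) (simp add: bo)
    finally show ?thesis .
  qed
  have F1a: "x0 \<bullet>c b l = 0" if "l < k" for l
    using F1[of l] that k by simp
  have F1b: "x0 \<bullet>c b (k+p) = y $ p" if "p < m" for p
  proof -
    have "x0 \<bullet>c b (k+p) = (\<Sum>q<m. y $ q * (if q = p then 1 else 0))"
      using F1[of "k+p"] that m by simp
    also have "\<dots> = y $ p" by (rule sum_delta_mult[OF that])
    finally show ?thesis .
  qed
  have Ax0: "A *\<^sub>v x0 = lincomb d m (\<lambda>q. y $ q) (\<lambda>q. A *\<^sub>v b (k+q))"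
    unfolding x0_def by (rule mult_lincomb[OF A bkc])
  have Ax0c: "A *\<^sub>v x0 \<in> carrier_vec d" using A x0c by simp
  have F2a: "(A *\<^sub>v x0) \<bullet>c b l = 0" if l: "l < k" for l
  proof -
    have ld: "l < d" using l k by simp
    have "(A *\<^sub>v x0) \<bullet>c b l = x0 \<bullet>c (A *\<^sub>v b l)" by (rule herm_cs[OF herm x0c bc[OF ld]])
    also have "A *\<^sub>v b l = complex_of_real (lam l) \<cdot>\<^sub>v b l" using eig bu l by simp
    also have "x0 \<bullet>c (complex_of_real (lam l) \<cdot>\<^sub>v b l) = cnj (complex_of_real (lam l)) * (x0 \<bullet>c b l)"
      by (rule cs_smult_right[OF bc[OF ld]])
    also have "\<dots> = 0" using F1a[OF l] by simp
    finally show ?thesis .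
  qed
  have F2b: "(A *\<^sub>v x0) \<bullet>c b (k+p) = a * y $ p" if p: "p < m" for p
  proof -
    have kp: "k + p < d" using p m by simp
    have "(A *\<^sub>v x0) \<bullet>c b (k+p) = (\<Sum>q<m. y $ q * ((A *\<^sub>v b (k+q)) \<bullet>c b (k+p)))"
      unfolding Ax0 by (rule lincomb_cs[OF bc[OF kp]])
    also have "\<dots> = (\<Sum>q<m. Ar $$ (p,q) * y $ q)"
      using p by (intro sum.cong refl) (simp add: Ar_def)
    also have "\<dots> = (Ar *\<^sub>v y) $ p"
      using row_dot_sum[OF Ar y(1) p] Ar p by simp
    also have "\<dots> = a * y $ p" using y(3) y(1) p by simp
    finally show ?thesis .
  qed
  have F3: "A *\<^sub>v x0 = a \<cdot>\<^sub>v x0"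
  proof (rule eq_vecI)
    show "dim_vec (A *\<^sub>v x0) = dim_vec (a \<cdot>\<^sub>v x0)" using A x0c by simp
    fix i assume "i < dim_vec (a \<cdot>\<^sub>v x0)"
    then have i: "i < d" using x0c by simp
    have "(A *\<^sub>v x0) $ i = (\<Sum>l<d. ((A *\<^sub>v x0) \<bullet>c b l) * b l $ i)"
      by (rule onb_expand[OF b Ax0c i])
    also have "\<dots> = (\<Sum>l<k. ((A *\<^sub>v x0) \<bullet>c b l) * b l $ i)
                   + (\<Sum>p<d-k. ((A *\<^sub>v x0) \<bullet>c b (k+p)) * b (k+p) $ i)"
      by (rule sum_split_kd) (use k in simp)
    also have "(\<Sum>l<k. ((A *\<^sub>v x0) \<bullet>c b l) * b l $ i) = 0"
      using F2a by simp
    also have "(\<Sum>p<d-k. ((A *\<^sub>v x0) \<bullet>c b (k+p)) * b (k+p) $ i) = (\<Sum>p<m. a * (y $ p * b (k+p) $ i))"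
      unfolding m_def[symmetric] using F2b by (intro sum.cong refl) simp
    also have "0 + \<dots> = a * x0 $ i"
      using i by (simp add: x0_def lincomb_def sum_distrib_left)
    also have "\<dots> = (a \<cdot>\<^sub>v x0) $ i" using i x0c by simp
    finally show "(A *\<^sub>v x0) $ i = (a \<cdot>\<^sub>v x0) $ i" .
  qed
  have x0nz: "x0 \<noteq> 0\<^sub>v d"
  proof
    assume z: "x0 = 0\<^sub>v d"
    obtain p where p: "p < m" "y $ p \<noteq> 0"
      using y(1,2) by (metis carrier_vecD eq_vecI index_zero_vec(1,2))
    have kp: "k + p < d" using p m by simp
    have "x0 \<bullet>c b (k+p) = 0" unfolding z using bc[OF kp] by (simp add: cs_sum)
    then show False using F1b[OF p(1)] p(2) by simp
  qed
  define s where "s = (\<Sum>i<d. (cmod (x0$i))^2)"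
  have s: "s > 0" using vec_nonzero_pos[OF x0c x0nz] by (simp add: s_def)
  have xx: "x0 \<bullet>c x0 = of_real s" using cs_self[OF x0c] by (simp add: s_def)
  have "(A *\<^sub>v x0) \<bullet>c x0 = x0 \<bullet>c (A *\<^sub>v x0)" by (rule herm_cs[OF herm x0c x0c])
  then have "a * (x0 \<bullet>c x0) = cnj a * (x0 \<bullet>c x0)"
    unfolding F3 cs_smult_left[OF x0c x0c] cs_smult_right[OF x0c] .
  then have "a = cnj a" using xx s by simp
  then have "Im a = 0" by (metis cnj.simps(2) neg_equal_zero)
  then have areal: "a = complex_of_real (Re a)" by (simp add: complex_eq_iff)
  obtain r where r: "r > 0" "(complex_of_real r \<cdot>\<^sub>v x0) \<bullet>c (complex_of_real r \<cdot>\<^sub>v x0) = 1"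
    using normalize_vec[OF x0c x0nz] by blast
  define x where "x = complex_of_real r \<cdot>\<^sub>v x0"
  have xc: "x \<in> carrier_vec d" using x0c by (simp add: x_def)
  have "A *\<^sub>v x = complex_of_real r \<cdot>\<^sub>v (A *\<^sub>v x0)"
    unfolding x_def by (rule mult_mat_vec[OF A x0c])
  also have "\<dots> = complex_of_real (Re a) \<cdot>\<^sub>v x"
    unfolding F3 x_def using x0c areal by (intro eq_vecI) (auto simp: mult_ac)
  finally have Ax: "A *\<^sub>v x = complex_of_real (Re a) \<cdot>\<^sub>v x" .
  have xu: "x \<bullet>c u i = 0" if i: "i < k" for i
  proof -
    have id: "i < d" using i k by simp
    have "x \<bullet>c u i = x \<bullet>c b i" using bu i by simp
    also have "\<dots> = complex_of_real r * (x0 \<bullet>c b i)"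
      unfolding x_def by (rule cs_smult_left[OF bc[OF id] x0c])
    also have "\<dots> = 0" using F1a[OF i] by simp
    finally show ?thesis .
  qed
  show ?thesis using xc Ax r(2) xu unfolding x_def[symmetric] by blast
qed

lemma spectral_orthn:
  assumes herm: "hermitian_mat d A"
  shows "k \<le> d \<Longrightarrow> \<exists>u lam. orthn d k u \<and> (\<forall>i<k. A *\<^sub>v u i = complex_of_real (lam i) \<cdot>\<^sub>v u i)"
proof (induction k)
  case 0
  show ?case by (auto simp: orthn_def)
next
  case (Suc k)
  then obtain u lam where ul: "orthn d k u" "\<forall>i<k. A *\<^sub>v u i = complex_of_real (lam i) \<cdot>\<^sub>v u i"
    by auto
  have k: "k < d" using Suc.prems by simp
  obtain x \<mu> where x: "x \<in> carrier_vec d" "A *\<^sub>v x = complex_of_real \<mu> \<cdot>\<^sub>v x" "x \<bullet>c x = 1"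
    "\<forall>i<k. x \<bullet>c u i = 0"
    using eig_step[OF herm k ul] by blast
  have uc: "\<forall>i<k. u i \<in> carrier_vec d" using ul(1) by (simp add: orthn_def)
  have ux: "u i \<bullet>c x = 0" if "i < k" for i
    using cs_conj[of "u i" d x] uc x(1,4) that by simp
  define u' where "u' = u(k := x)"
  define lam' where "lam' = lam(k := \<mu>)"
  have "orthn d (Suc k) u'"
    unfolding orthn_def
  proof (intro conjI allI impI)
    fix i assume "i < Suc k" then show "u' i \<in> carrier_vec d"
      using uc x(1) by (auto simp: u'_def less_Suc_eq)
  next
    fix i j assume ij: "i < Suc k" "j < Suc k"
    show "u' i \<bullet>c u' j = (if i = j then 1 else 0)"
    proof (cases "i = k"; cases "j = k")
      assume "i = k" "j = k" then show ?thesis using x(3) by (simp add: u'_def)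
    next
      assume "i = k" "j \<noteq> k" then show ?thesis using x(4) ij by (simp add: u'_def)
    next
      assume "i \<noteq> k" "j = k" then show ?thesis using ux ij by (simp add: u'_def)
    next
      assume "i \<noteq> k" "j \<noteq> k" then show ?thesis using ul(1) ij by (simp add: u'_def orthn_def)
    qed
  qed
  moreover have "\<forall>i<Suc k. A *\<^sub>v u' i = complex_of_real (lam' i) \<cdot>\<^sub>v u' i"
    using ul(2) x(2) by (auto simp: u'_def lam'_def less_Suc_eq)
  ultimately show ?case by blast
qed

lemma spectral:
  assumes "hermitian_mat d A"
  shows "\<exists>u lam. onb d u \<and> (\<forall>i<d. A *\<^sub>v u i = complex_of_real (lam i) \<cdot>\<^sub>v u i)"
  using spectral_orthn[OF assms, of d] by (simp add: onb_orthn)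

definition N2 :: "nat \<Rightarrow> complex vec \<Rightarrow> real" where
  "N2 d v = (\<Sum>i<d. (cmod (v$i))^2)"

lemma N2_nonneg: "N2 d v \<ge> 0" by (simp add: N2_def sum_nonneg)

lemma eig_finite:
  assumes "(M::complex mat) \<in> carrier_mat d d"
  shows "finite {k. eigenvalue M k}"
proof -
  have "char_poly M \<noteq> 0" using degree_monic_char_poly[OF assms] by auto
  then have "finite {x. poly (char_poly M) x = 0}" by (rule poly_roots_finite)
  moreover have "{k. eigenvalue M k} = {x. poly (char_poly M) x = 0}"
    using eigenvalue_root_char_poly[OF assms] by auto
  ultimately show ?thesis by simp
qed

lemma eig_in_set:
  assumes "(M::complex mat) \<in> carrier_mat d d" "u \<in> carrier_vec d" "u \<bullet>c u = 1"
    "M *\<^sub>v u = complex_of_real l \<cdot>\<^sub>v u"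
  shows "l \<in> Re ` {k. eigenvalue M k}"
proof -
  have "u \<noteq> 0\<^sub>v d"
  proof
    assume "u = 0\<^sub>v d" then have "u \<bullet>c u = 0" by (simp add: cs_sum)
    then show False using assms(3) by simp
  qed
  then have "eigenvalue M (complex_of_real l)"
    unfolding eigenvalue_def eigenvector_def using assms by auto
  then show ?thesis by force
qed

lemma cs_minus_left: "(w::complex vec) \<in> carrier_vec d \<Longrightarrow> x \<in> carrier_vec d \<Longrightarrow> y \<in> carrier_vec d \<Longrightarrow>
  (x - y) \<bullet>c w = x \<bullet>c w - y \<bullet>c w"
  by (simp add: cs_sum sum_subtractf algebra_simps)

lemma parseval:
  assumes u: "onb d u" and z: "z \<in> carrier_vec d"
  shows "N2 d z = (\<Sum>l<d. (cmod (z \<bullet>c u l))^2)"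
proof -
  have uc: "\<And>l. l < d \<Longrightarrow> u l \<in> carrier_vec d" using u by (simp add: onb_def)
  have "complex_of_real (N2 d z) = z \<bullet>c z" using cs_self[OF z] by (simp add: N2_def)
  also have "\<dots> = (\<Sum>i<d. z $ i * cnj (z $ i))" by (rule cs_sum[OF z])
  also have "\<dots> = (\<Sum>i<d. z $ i * cnj (\<Sum>l<d. (z \<bullet>c u l) * u l $ i))"
    using onb_expand[OF u z] by (intro sum.cong refl) simp
  also have "\<dots> = (\<Sum>l<d. cnj (z \<bullet>c u l) * (\<Sum>i<d. z $ i * cnj (u l $ i)))"
    by (simp add: sum_distrib_left sum_distrib_right mult_ac) (rule sum.swap)
  also have "\<dots> = (\<Sum>l<d. cnj (z \<bullet>c u l) * (z \<bullet>c u l))"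
  proof (intro sum.cong refl)
    fix l assume "l \<in> {..<d}"
    then show "cnj (z \<bullet>c u l) * (\<Sum>i<d. z $ i * cnj (u l $ i)) = cnj (z \<bullet>c u l) * (z \<bullet>c u l)"
      using cs_sum[OF uc, of l z] by simp
  qed
  also have "\<dots> = (\<Sum>l<d. complex_of_real ((cmod (z \<bullet>c u l))^2))"
    by (intro sum.cong refl) (metis complex_norm_square mult.commute)
  also have "\<dots> = complex_of_real (\<Sum>l<d. (cmod (z \<bullet>c u l))^2)"
    by (simp only: of_real_sum)
  finally show ?thesis by (simp only: of_real_eq_iff)
qed

lemma herm_bound:
  assumes herm: "hermitian_mat d A" and u: "onb d u"
    and eig: "\<forall>i<d. A *\<^sub>v u i = complex_of_real (lam i) \<cdot>\<^sub>v u i"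
    and bnd: "\<forall>i<d. \<bar>lam i - c\<bar> \<le> r"
    and v: "v \<in> carrier_vec d"
  shows "N2 d (A *\<^sub>v v - complex_of_real c \<cdot>\<^sub>v v) \<le> r^2 * N2 d v"
proof -
  have A: "A \<in> carrier_mat d d" using herm by (simp add: hermitian_mat_def)
  have uc: "\<And>l. l < d \<Longrightarrow> u l \<in> carrier_vec d" using u by (simp add: onb_def)
  define w where "w = A *\<^sub>v v - complex_of_real c \<cdot>\<^sub>v v"
  have wc: "w \<in> carrier_vec d" using A v by (simp add: w_def)
  have wu: "w \<bullet>c u l = complex_of_real (lam l - c) * (v \<bullet>c u l)" if l: "l < d" for l
  proof -
    have "w \<bullet>c u l = (A *\<^sub>v v) \<bullet>c u l - (complex_of_real c \<cdot>\<^sub>v v) \<bullet>c u l"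
      unfolding w_def using A v uc[OF l] by (intro cs_minus_left) auto
    also have "(A *\<^sub>v v) \<bullet>c u l = v \<bullet>c (A *\<^sub>v u l)" by (rule herm_cs[OF herm v uc[OF l]])
    also have "\<dots> = complex_of_real (lam l) * (v \<bullet>c u l)"
      using eig l cs_smult_right[OF uc[OF l], of v] by simp
    also have "(complex_of_real c \<cdot>\<^sub>v v) \<bullet>c u l = complex_of_real c * (v \<bullet>c u l)"
      by (rule cs_smult_left[OF uc[OF l] v])
    finally show ?thesis by (simp add: algebra_simps)
  qed
  have "N2 d w = (\<Sum>l<d. (cmod (w \<bullet>c u l))^2)" by (rule parseval[OF u wc])
  also have "\<dots> = (\<Sum>l<d. (lam l - c)^2 * (cmod (v \<bullet>c u l))^2)"
  proof (intro sum.cong refl)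
    fix l assume "l \<in> {..<d}"
    then have "w \<bullet>c u l = complex_of_real (lam l - c) * (v \<bullet>c u l)" using wu by simp
    then show "(cmod (w \<bullet>c u l))^2 = (lam l - c)^2 * (cmod (v \<bullet>c u l))^2"
      by (simp only: norm_mult norm_of_real power_mult_distrib power2_abs)
  qed
  also have "\<dots> \<le> (\<Sum>l<d. r^2 * (cmod (v \<bullet>c u l))^2)"
  proof (intro sum_mono mult_right_mono)
    fix l assume "l \<in> {..<d}"
    then have "\<bar>lam l - c\<bar> \<le> r" using bnd by simp
    then have "\<bar>lam l - c\<bar>^2 \<le> r^2" by (rule power_mono) simp
    then show "(lam l - c)^2 \<le> r^2" by (simp only: power2_abs)
  qed simp
  also have "\<dots> = r^2 * N2 d v" by (simp add: parseval[OF u v] sum_distrib_left)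
  finally show ?thesis by (simp add: w_def)
qed

lemma eig_decomp:
  assumes A: "(A::complex mat) \<in> carrier_mat d d" and u: "onb d u"
    and eig: "\<forall>i<d. A *\<^sub>v u i = \<mu> i \<cdot>\<^sub>v u i"
    and ab: "a < d" "b < d"
  shows "A $$ (a,b) = (\<Sum>k<d. \<mu> k * u k $ a * cnj (u k $ b))"
proof -
  have uc: "\<And>l. l < d \<Longrightarrow> u l \<in> carrier_vec d" using u by (simp add: onb_def)
  have "A $$ (a,b) = (\<Sum>c<d. A $$ (a,c) * (if c = b then 1 else 0))"
    using ab by (simp add: if_distrib cong: if_cong)
  also have "\<dots> = (\<Sum>c<d. A $$ (a,c) * (\<Sum>k<d. u k $ c * cnj (u k $ b)))"
    using onb_complete[OF u _ ab(2)] by (intro sum.cong refl) simp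
  also have "\<dots> = (\<Sum>k<d. cnj (u k $ b) * (\<Sum>c<d. A $$ (a,c) * u k $ c))"
    by (simp add: sum_distrib_left sum_distrib_right mult_ac) (rule sum.swap)
  also have "\<dots> = (\<Sum>k<d. cnj (u k $ b) * (A *\<^sub>v u k) $ a)"
    using A ab uc by (intro sum.cong refl) (simp add: row_dot_sum)
  also have "\<dots> = (\<Sum>k<d. \<mu> k * u k $ a * cnj (u k $ b))"
  proof (intro sum.cong refl)
    fix k assume "k \<in> {..<d}"
    then have k: "k < d" by simp
    show "cnj (u k $ b) * (A *\<^sub>v u k) $ a = \<mu> k * u k $ a * cnj (u k $ b)"
      using eig k ab uc[OF k] by (simp add: mult_ac)
  qed
  finally show ?thesis .
qed

lemma density_decomp:
  assumes "density_mat d \<rho>"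
  shows "\<exists>u lam. onb d u \<and> (\<forall>k<d. lam k \<ge> 0) \<and> (\<Sum>k<d. lam k) = 1 \<and>
     (\<forall>a<d. \<forall>b<d. \<rho> $$ (a,b) = (\<Sum>k<d. complex_of_real (lam k) * u k $ a * cnj (u k $ b)))"
proof -
  have herm: "hermitian_mat d \<rho>" and psd: "\<forall>v\<in>carrier_vec d. 0 \<le> Re ((\<rho> *\<^sub>v v) \<bullet>c v)"
    and tr: "mtrace \<rho> = 1" using assms by (auto simp: density_mat_def)
  have A: "\<rho> \<in> carrier_mat d d" using herm by (simp add: hermitian_mat_def)
  obtain u lam where u: "onb d u" and eig: "\<forall>i<d. \<rho> *\<^sub>v u i = complex_of_real (lam i) \<cdot>\<^sub>v u i"
    using spectral[OF herm] by blast
  have uc: "\<And>l. l < d \<Longrightarrow> u l \<in> carrier_vec d" using u by (simp add: onb_def)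
  have uu: "\<And>l. l < d \<Longrightarrow> u l \<bullet>c u l = 1" using u by (simp add: onb_def)
  have dec: "\<forall>a<d. \<forall>b<d. \<rho> $$ (a,b) = (\<Sum>k<d. complex_of_real (lam k) * u k $ a * cnj (u k $ b))"
    using eig_decomp[OF A u, of "\<lambda>i. complex_of_real (lam i)"] eig by blast
  have pos: "lam k \<ge> 0" if k: "k < d" for k
  proof -
    have "(\<rho> *\<^sub>v u k) \<bullet>c u k = complex_of_real (lam k)"
      using eig k cs_smult_left[OF uc[OF k] uc[OF k]] uu[OF k] by simp
    then show ?thesis using psd uc[OF k] by force
  qed
  have "mtrace \<rho> = (\<Sum>a<d. \<Sum>k<d. complex_of_real (lam k) * (u k $ a * cnj (u k $ a)))"
    unfolding mtrace_def using A dec by (intro sum.cong) (auto simp: mult_ac)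
  also have "\<dots> = (\<Sum>k<d. complex_of_real (lam k) * (u k \<bullet>c u k))"
  proof (subst sum.swap, intro sum.cong refl)
    fix k assume "k \<in> {..<d}"
    then show "(\<Sum>a<d. complex_of_real (lam k) * (u k $ a * cnj (u k $ a))) = complex_of_real (lam k) * (u k \<bullet>c u k)"
      using cs_sum[OF uc, of k "u k"] by (simp add: sum_distrib_left)
  qed
  also have "\<dots> = complex_of_real (\<Sum>k<d. lam k)" using uu by simp
  finally have "mtrace \<rho> = complex_of_real (\<Sum>k<d. lam k)" .
  then have "complex_of_real (\<Sum>k<d. lam k) = 1" using tr by simp
  then have "(\<Sum>k<d. lam k) = 1" by (simp only: of_real_eq_1_iff)
  then show ?thesis using u pos dec by blast
qed

definition nrm :: "nat \<Rightarrow> complex vec \<Rightarrow> real" where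
  "nrm d v = sqrt (N2 d v)"

lemma nrm_L2: "nrm d v = L2_set (\<lambda>i. cmod (v$i)) {..<d}"
  by (simp add: nrm_def N2_def L2_set_def)

lemma nrm_nonneg: "nrm d v \<ge> 0" by (simp add: nrm_def N2_nonneg)

lemma nrm_add:
  assumes "x \<in> carrier_vec d" "y \<in> carrier_vec d"
  shows "nrm d (x + y) \<le> nrm d x + nrm d y"
proof -
  have "nrm d (x + y) = L2_set (\<lambda>i. cmod (x$i + y$i)) {..<d}"
    unfolding nrm_L2 using assms by (intro L2_set_cong) auto
  also have "\<dots> \<le> L2_set (\<lambda>i. cmod (x$i) + cmod (y$i)) {..<d}"
    by (rule L2_set_mono) (auto intro: norm_triangle_ineq)
  also have "\<dots> \<le> nrm d x + nrm d y"
    unfolding nrm_L2 by (rule L2_set_triangle_ineq)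
  finally show ?thesis .
qed

lemma nrm_from_N2:
  assumes "N2 d x \<le> r^2 * N2 d y" "r \<ge> 0"
  shows "nrm d x \<le> r * nrm d y"
proof -
  have "sqrt (N2 d x) \<le> sqrt (r^2 * N2 d y)" using assms(1) by (rule real_sqrt_le_mono)
  also have "\<dots> = r * sqrt (N2 d y)" using assms(2) by (simp add: real_sqrt_mult)
  finally show ?thesis by (simp add: nrm_def)
qed

lemma nrm_sq: "(nrm d v)^2 = N2 d v" by (simp add: nrm_def N2_nonneg)

lemma adj_cs:
  assumes A: "A \<in> carrier_mat d d" and v: "v \<in> carrier_vec d" and w: "w \<in> carrier_vec d"
  shows "(A *\<^sub>v v) \<bullet>c w = v \<bullet>c (adj A *\<^sub>v w)"
proof -
  have "(A *\<^sub>v v) \<bullet>c w = (\<Sum>i<d. (\<Sum>j<d. A $$ (i,j) * v $ j) * cnj (w $ i))"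
    using A v w by (simp add: cs_sum row_dot_sum)
  also have "\<dots> = (\<Sum>i<d. \<Sum>j<d. v $ j * (A $$ (i,j) * cnj (w $ i)))"
    by (simp add: sum_distrib_left sum_distrib_right mult_ac)
  also have "\<dots> = (\<Sum>j<d. \<Sum>i<d. v $ j * (cnj (adj A $$ (j,i)) * cnj (w $ i)))"
    using A by (subst sum.swap) (intro sum.cong refl, simp)
  also have "\<dots> = (\<Sum>j<d. v $ j * cnj (\<Sum>i<d. adj A $$ (j,i) * w $ i))"
    by (simp add: sum_distrib_left)
  also have "\<dots> = v \<bullet>c (adj A *\<^sub>v w)"
  proof -
    have Aw: "adj A *\<^sub>v w \<in> carrier_vec d" by (rule mult_mat_vec_carrier[OF adj_carrier[OF A] w])
    have "v \<bullet>c (adj A *\<^sub>v w) = (\<Sum>j<d. v$j * cnj ((adj A *\<^sub>v w)$j))" by (rule cs_sum[OF Aw])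
    also have "\<dots> = (\<Sum>j<d. v $ j * cnj (\<Sum>i<d. adj A $$ (j,i) * w $ i))"
      using A w by (intro sum.cong refl) (simp add: row_dot_sum[OF adj_carrier[OF A]])
    finally show ?thesis by simp
  qed
  finally show ?thesis .
qed

lemma unitary_N2:
  assumes Q: "Q \<in> carrier_mat d d" and QQ: "adj Q * Q = 1\<^sub>m d" and v: "v \<in> carrier_vec d"
  shows "N2 d (Q *\<^sub>v v) = N2 d v"
proof -
  have Qv: "Q *\<^sub>v v \<in> carrier_vec d" using Q v by simp
  have "(Q *\<^sub>v v) \<bullet>c (Q *\<^sub>v v) = v \<bullet>c (adj Q *\<^sub>v (Q *\<^sub>v v))" by (rule adj_cs[OF Q v Qv])
  also have "adj Q *\<^sub>v (Q *\<^sub>v v) = (adj Q * Q) *\<^sub>v v"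
    by (rule assoc_mult_mat_vec[OF adj_carrier[OF Q] Q v, symmetric])
  also have "\<dots> = v" using QQ v by simp
  finally have "complex_of_real (N2 d (Q *\<^sub>v v)) = complex_of_real (N2 d v)"
    using cs_self[OF Qv] cs_self[OF v] by (simp add: N2_def)
  then show ?thesis by (simp only: of_real_eq_iff)
qed

lemma unitary_nrm:
  assumes "Q \<in> carrier_mat d d" "adj Q * Q = 1\<^sub>m d" "v \<in> carrier_vec d"
  shows "nrm d (Q *\<^sub>v v) = nrm d v"
  using unitary_N2[OF assms] by (simp add: nrm_def)

lemma gap_bound:
  assumes herm: "hermitian_mat d G" and d: "0 < d"
  shows "spectral_gap G \<ge> 0 \<and> (\<exists>c. \<forall>v\<in>carrier_vec d.
           nrm d (G *\<^sub>v v - complex_of_real c \<cdot>\<^sub>v v) \<le> spectral_gap G / 2 * nrm d v)"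
proof -
  have G: "G \<in> carrier_mat d d" using herm by (simp add: hermitian_mat_def)
  obtain u lam where u: "onb d u" and eig: "\<forall>i<d. G *\<^sub>v u i = complex_of_real (lam i) \<cdot>\<^sub>v u i"
    using spectral[OF herm] by blast
  define E where "E = Re ` {k. eigenvalue G k}"
  have fin: "finite E" unfolding E_def using eig_finite[OF G] by simp
  have inE: "lam i \<in> E" if "i < d" for i
    unfolding E_def using u eig that by (intro eig_in_set[OF G]) (auto simp: onb_def)
  have ne: "E \<noteq> {}" using inE[OF d] by auto
  define M where "M = Max E"
  define m where "m = Min E"
  have lb: "m \<le> lam i" "lam i \<le> M" if "i < d" for i
    using inE[OF that] fin by (auto simp: M_def m_def)
  have gap: "spectral_gap G = M - m" by (simp add: spectral_gap_def M_def m_def E_def)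
  have mM: "m \<le> M" using lb[OF d] by simp
  define c where "c = (M + m) / 2"
  define r where "r = (M - m) / 2"
  have r0: "r \<ge> 0" using mM by (simp add: r_def)
  have bnd: "\<forall>i<d. \<bar>lam i - c\<bar> \<le> r"
  proof (intro allI impI)
    fix i assume i: "i < d"
    have "m \<le> lam i" "lam i \<le> M" using lb[OF i] by auto
    then show "\<bar>lam i - c\<bar> \<le> r" unfolding abs_le_iff c_def r_def by (simp add: field_simps)
  qed
  have "\<forall>v\<in>carrier_vec d. nrm d (G *\<^sub>v v - complex_of_real c \<cdot>\<^sub>v v) \<le> spectral_gap G / 2 * nrm d v"
  proof
    fix v :: "complex vec" assume v: "v \<in> carrier_vec d"
    have "N2 d (G *\<^sub>v v - complex_of_real c \<cdot>\<^sub>v v) \<le> r^2 * N2 d v"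
      by (rule herm_bound[OF herm u eig bnd v])
    then have "nrm d (G *\<^sub>v v - complex_of_real c \<cdot>\<^sub>v v) \<le> r * nrm d v"
      using nrm_from_N2 r0 by blast
    then show "nrm d (G *\<^sub>v v - complex_of_real c \<cdot>\<^sub>v v) \<le> spectral_gap G / 2 * nrm d v"
      by (simp add: gap r_def)
  qed
  then show ?thesis using gap mM by auto
qed

definition mvd :: "nat \<Rightarrow> (real \<Rightarrow> complex mat) \<Rightarrow> complex mat \<Rightarrow> real \<Rightarrow> bool" where
  "mvd d F F' x \<longleftrightarrow> (\<forall>a<d. \<forall>b<d. ((\<lambda>y. F y $$ (a,b)) has_vector_derivative F' $$ (a,b)) (at x))"

lemma mvd_mult:
  assumes X: "open X" "x \<in> X" and FG: "\<forall>y\<in>X. F y \<in> carrier_mat d d \<and> G y \<in> carrier_mat d d"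
    and F': "F' \<in> carrier_mat d d" and G': "G' \<in> carrier_mat d d"
    and dF: "mvd d F F' x" and dG: "mvd d G G' x"
  shows "mvd d (\<lambda>y. F y * G y) (F' * G x + F x * G') x"
  unfolding mvd_def
proof (intro allI impI)
  fix a b assume ab: "a < d" "b < d"
  have Fx: "F x \<in> carrier_mat d d" and Gx: "G x \<in> carrier_mat d d" using FG X by auto
  have der: "((\<lambda>y. \<Sum>c<d. F y $$ (a,c) * G y $$ (c,b)) has_vector_derivative
      (\<Sum>c<d. F x $$ (a,c) * G' $$ (c,b) + F' $$ (a,c) * G x $$ (c,b))) (at x)"
  proof (rule has_vector_derivative_sum)
    fix c assume "c \<in> {..<d}"
    then have c: "c < d" by simp
    show "((\<lambda>y. F y $$ (a,c) * G y $$ (c,b)) has_vector_derivative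
      (F x $$ (a,c) * G' $$ (c,b) + F' $$ (a,c) * G x $$ (c,b))) (at x)"
      using dF dG ab c unfolding mvd_def by (intro has_vector_derivative_mult) auto
  qed
  have "(F' * G x + F x * G') $$ (a,b) = (F' * G x) $$ (a,b) + (F x * G') $$ (a,b)"
    by (rule index_add_mat(1)) (use Fx G' ab in simp_all)
  also have "\<dots> = (\<Sum>c<d. F' $$ (a,c) * G x $$ (c,b)) + (\<Sum>c<d. F x $$ (a,c) * G' $$ (c,b))"
    using mm_sum[OF F' Gx ab] mm_sum[OF Fx G' ab] by simp
  also have "\<dots> = (\<Sum>c<d. F x $$ (a,c) * G' $$ (c,b) + F' $$ (a,c) * G x $$ (c,b))"
    by (simp add: sum.distrib)
  finally have eq: "(F' * G x + F x * G') $$ (a,b) = (\<Sum>c<d. F x $$ (a,c) * G' $$ (c,b) + F' $$ (a,c) * G x $$ (c,b))" .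
  show "((\<lambda>y. (F y * G y) $$ (a,b)) has_vector_derivative (F' * G x + F x * G') $$ (a,b)) (at x)"
    unfolding eq
  proof (rule has_vector_derivative_transform_within_open[OF der X])
    fix y assume "y \<in> X"
    then have "F y \<in> carrier_mat d d" "G y \<in> carrier_mat d d" using FG by auto
    then show "(\<Sum>c<d. F y $$ (a,c) * G y $$ (c,b)) = (F y * G y) $$ (a,b)"
      using mm_sum ab by metis
  qed
qed

lemma mvd_const: "mvd d (\<lambda>y. V) (0\<^sub>m d d) x"
  unfolding mvd_def by simp

lemma mvd_const_on:
  assumes X: "open X" "x \<in> X" and F: "\<forall>y\<in>X. F y = C"
  shows "mvd d F (0\<^sub>m d d) x"
  unfolding mvd_def
proof (intro allI impI)
  fix a b assume ab: "a < d" "b < d"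
  have "((\<lambda>y. C $$ (a,b)) has_vector_derivative 0) (at x)" by simp
  then have "((\<lambda>y. F y $$ (a,b)) has_vector_derivative 0) (at x)"
    by (rule has_vector_derivative_transform_within_open[OF _ X]) (use F in simp)
  then show "((\<lambda>y. F y $$ (a,b)) has_vector_derivative 0\<^sub>m d d $$ (a,b)) (at x)" using ab by simp
qed

lemma mvd_adj:
  assumes X: "open X" "x \<in> X" and F: "\<forall>y\<in>X. F y \<in> carrier_mat d d"
    and F': "F' \<in> carrier_mat d d" and dF: "mvd d F F' x"
  shows "mvd d (\<lambda>y. adj (F y)) (adj F') x"
  unfolding mvd_def
proof (intro allI impI)
  fix a b assume ab: "a < d" "b < d"
  have "((\<lambda>y. cnj (F y $$ (b,a))) has_vector_derivative cnj (F' $$ (b,a))) (at x)"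
    using dF ab unfolding mvd_def by (intro has_vector_derivative_cnj) auto
  then have "((\<lambda>y. adj (F y) $$ (a,b)) has_vector_derivative cnj (F' $$ (b,a))) (at x)"
  proof (rule has_vector_derivative_transform_within_open[OF _ X])
    fix y assume "y \<in> X" then have "F y \<in> carrier_mat d d" using F by auto
    then show "cnj (F y $$ (b,a)) = adj (F y) $$ (a,b)" using ab by simp
  qed
  then show "((\<lambda>y. adj (F y) $$ (a,b)) has_vector_derivative adj F' $$ (a,b)) (at x)"
    using F' ab by simp
qed

lemma mvd_mderiv:
  assumes "mvd d F F' x" "F' \<in> carrier_mat d d"
  shows "mderiv d F x = F'"
  using assms unfolding mvd_def mderiv_def
  by (intro eq_matI) (auto simp: vector_derivative_at)

lemma mvd_of_diff:
  assumes "\<forall>a<d. \<forall>b<d. (\<lambda>y. F y $$ (a,b)) differentiable (at x)"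
  shows "mvd d F (mderiv d F x) x"
  unfolding mvd_def mderiv_def using assms
  by (simp add: vector_derivative_works)

lemma mderiv_carrier[simp]: "mderiv d F x \<in> carrier_mat d d"
  by (simp add: mderiv_def)

lemma mvd_unique:
  assumes "mvd d F F1 x" "mvd d F F2 x" "F1 \<in> carrier_mat d d" "F2 \<in> carrier_mat d d"
  shows "F1 = F2"
proof (rule eq_matI)
  fix i j assume "i < dim_row F2" "j < dim_col F2"
  then have ij: "i < d" "j < d" using assms(4) by auto
  show "F1 $$ (i,j) = F2 $$ (i,j)"
    using assms(1,2) ij unfolding mvd_def by (meson vector_derivative_unique_at)
qed (use assms(3,4) in auto)

lemma adj_mult_entry:
  assumes "A \<in> carrier_mat d d" "B \<in> carrier_mat d d" "a < d" "b < d"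
  shows "cnj ((A * adj B) $$ (b,a)) = (B * adj A) $$ (a,b)"
proof -
  have "cnj ((A * adj B) $$ (b,a)) = cnj (\<Sum>c<d. A $$ (b,c) * adj B $$ (c,a))"
    using mm_sum[OF assms(1) adj_carrier[OF assms(2)] assms(4,3)] by simp
  also have "\<dots> = (\<Sum>c<d. B $$ (a,c) * adj A $$ (c,b))"
    unfolding cnj_sum using assms by (intro sum.cong refl) (simp add: mult.commute)
  also have "\<dots> = (B * adj A) $$ (a,b)"
    using mm_sum[OF assms(2) adj_carrier[OF assms(1)] assms(3,4)] by simp
  finally show ?thesis .
qed

lemma g_herm:
  assumes X: "open X" "x \<in> X"
    and F: "\<forall>y\<in>X. F y \<in> carrier_mat d d \<and> F y * adj (F y) = 1\<^sub>m d"
    and dF: "mvd d F F' x" and F': "F' \<in> carrier_mat d d"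
  shows "hermitian_mat d (\<i> \<cdot>\<^sub>m (F' * adj (F x)))"
proof -
  have Fc: "\<forall>y\<in>X. F y \<in> carrier_mat d d" using F by auto
  have Fx: "F x \<in> carrier_mat d d" using F X by auto
  have d1: "mvd d (\<lambda>y. F y * adj (F y)) (F' * adj (F x) + F x * adj F') x"
    using mvd_mult[OF X _ F' adj_carrier[OF F'] dF mvd_adj[OF X Fc F' dF]] F by auto
  have d2: "mvd d (\<lambda>y. F y * adj (F y)) (0\<^sub>m d d) x"
    by (rule mvd_const_on[OF X]) (use F in auto)
  have z: "F' * adj (F x) + F x * adj F' = 0\<^sub>m d d"
    by (rule mvd_unique[OF d1 d2]) (use F' Fx in auto)
  define P where "P = F' * adj (F x)"
  have P: "P \<in> carrier_mat d d" using F' Fx by (simp add: P_def)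
  have Q: "(F x * adj F') $$ (a,b) = - P $$ (a,b)" if "a < d" "b < d" for a b
  proof -
    have "(F' * adj (F x) + F x * adj F') $$ (a,b) = 0" using z that by simp
    then show ?thesis using that F' Fx by (simp add: P_def add_eq_0_iff)
  qed
  show ?thesis unfolding hermitian_mat_def P_def[symmetric]
  proof
    show "\<i> \<cdot>\<^sub>m P \<in> carrier_mat d d" using P by simp
    show "adj (\<i> \<cdot>\<^sub>m P) = \<i> \<cdot>\<^sub>m P"
    proof (rule eq_matI)
      fix a b assume "a < dim_row (\<i> \<cdot>\<^sub>m P)" "b < dim_col (\<i> \<cdot>\<^sub>m P)"
      then have ab: "a < d" "b < d" using P by auto
      have "adj (\<i> \<cdot>\<^sub>m P) $$ (a,b) = - \<i> * cnj (P $$ (b,a))" using ab P by simp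
      also have "cnj (P $$ (b,a)) = (F x * adj F') $$ (a,b)"
        unfolding P_def by (rule adj_mult_entry[OF F' Fx ab])
      also have "\<dots> = - P $$ (a,b)" by (rule Q[OF ab])
      finally show "adj (\<i> \<cdot>\<^sub>m P) $$ (a,b) = (\<i> \<cdot>\<^sub>m P) $$ (a,b)" using ab P by simp
    qed (use P in auto)
  qed
qed

lemma smult_mat_vec: "(A::complex mat) \<in> carrier_mat d d \<Longrightarrow> v \<in> carrier_vec d \<Longrightarrow>
  (c \<cdot>\<^sub>m A) *\<^sub>v v = c \<cdot>\<^sub>v (A *\<^sub>v v)"
  by (intro eq_vecI) (auto simp: row_dot_sum sum_distrib_left mult_ac)

lemma pow_eig:
  assumes A: "(A::complex mat) \<in> carrier_mat d d" and v: "v \<in> carrier_vec d"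
    and e: "A *\<^sub>v v = \<mu> \<cdot>\<^sub>v v"
  shows "(A ^\<^sub>m n) *\<^sub>v v = (\<mu> ^ n) \<cdot>\<^sub>v v"
proof (induction n)
  case 0
  then show ?case using A v by simp
next
  case (Suc n)
  have "(A ^\<^sub>m Suc n) *\<^sub>v v = (A ^\<^sub>m n * A) *\<^sub>v v" by simp
  also have "\<dots> = (A ^\<^sub>m n) *\<^sub>v (A *\<^sub>v v)"
    by (rule assoc_mult_mat_vec[OF pow_carrier_mat[OF A] A v])
  also have "\<dots> = \<mu> \<cdot>\<^sub>v ((A ^\<^sub>m n) *\<^sub>v v)"
    unfolding e by (rule mult_mat_vec[OF pow_carrier_mat[OF A] v])
  also have "\<dots> = (\<mu> ^ Suc n) \<cdot>\<^sub>v v" unfolding Suc.IH using v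
    by (intro eq_vecI) auto
  finally show ?case .
qed

lemma pow_decomp:
  assumes A: "(A::complex mat) \<in> carrier_mat d d" and u: "onb d u"
    and eig: "\<forall>i<d. A *\<^sub>v u i = \<mu> i \<cdot>\<^sub>v u i" and ab: "a < d" "b < d"
  shows "(A ^\<^sub>m n) $$ (a,b) = (\<Sum>k<d. \<mu> k ^ n * u k $ a * cnj (u k $ b))"
proof -
  have uc: "\<And>l. l < d \<Longrightarrow> u l \<in> carrier_vec d" using u by (simp add: onb_def)
  have "\<forall>i<d. (A ^\<^sub>m n) *\<^sub>v u i = (\<mu> i ^ n) \<cdot>\<^sub>v u i"
    using pow_eig[OF A uc] eig by blast
  then show ?thesis using eig_decomp[where \<mu>="\<lambda>i. \<mu> i ^ n", OF pow_carrier_mat[OF A] u _ ab] by blast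
qed

lemma mat_exp_decomp:
  assumes A: "(A::complex mat) \<in> carrier_mat d d" and u: "onb d u"
    and eig: "\<forall>i<d. A *\<^sub>v u i = \<mu> i \<cdot>\<^sub>v u i" and ab: "a < d" "b < d"
  shows "mat_exp A $$ (a,b) = (\<Sum>k<d. exp (\<mu> k) * u k $ a * cnj (u k $ b))"
proof -
  define w where "w k = u k $ a * cnj (u k $ b)" for k
  have "mat_exp A $$ (a,b) = (\<Sum>n. (A ^\<^sub>m n) $$ (a,b) / of_nat (fact n))"
    using A ab by (simp add: mat_exp_def)
  also have "(\<lambda>n. (A ^\<^sub>m n) $$ (a,b) / of_nat (fact n)) = (\<lambda>n. \<Sum>k<d. \<mu> k ^ n /\<^sub>R fact n * w k)"
  proof
    fix n
    have "(A ^\<^sub>m n) $$ (a,b) / of_nat (fact n) = (\<Sum>k<d. \<mu> k ^ n * w k) / of_nat (fact n)"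
      using pow_decomp[OF A u eig ab] by (simp add: w_def mult_ac)
    also have "\<dots> = (\<Sum>k<d. \<mu> k ^ n /\<^sub>R fact n * w k)"
      by (simp add: sum_divide_distrib scaleR_conv_of_real divide_inverse sum_distrib_left mult_ac)
    finally show "(A ^\<^sub>m n) $$ (a,b) / of_nat (fact n) = (\<Sum>k<d. \<mu> k ^ n /\<^sub>R fact n * w k)" .
  qed
  also have "(\<Sum>n. \<Sum>k<d. \<mu> k ^ n /\<^sub>R fact n * w k) = (\<Sum>k<d. exp (\<mu> k) * w k)"
  proof (rule sums_unique[symmetric], rule sums_sum)
    fix k show "(\<lambda>n. \<mu> k ^ n /\<^sub>R fact n * w k) sums (exp (\<mu> k) * w k)"
      by (rule sums_mult2[OF exp_converges])
  qed
  finally show ?thesis by (simp add: w_def mult_ac)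
qed

lemma decomp_unitary:
  assumes u: "onb d u" and F: "F \<in> carrier_mat d d"
    and Fe: "\<forall>a<d. \<forall>b<d. F $$ (a,b) = (\<Sum>k<d. z k * u k $ a * cnj (u k $ b))"
    and z: "\<forall>k<d. z k * cnj (z k) = 1"
  shows "F * adj F = 1\<^sub>m d \<and> adj F * F = 1\<^sub>m d"
proof -
  have uc: "\<And>l. l < d \<Longrightarrow> u l \<in> carrier_vec d" using u by (simp add: onb_def)
  have uo: "(\<Sum>c<d. u l $ c * cnj (u j $ c)) = (if l = j then 1 else 0)" if "j < d" "l < d" for j l
  proof -
    have "u l \<bullet>c u j = (if l = j then 1 else 0)" using u that by (simp add: onb_def)
    then show ?thesis using cs_sum[OF uc[OF that(1)], of "u l"] by simp
  qed
  have FF: "F * adj F = 1\<^sub>m d"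
  proof (rule eq_matI)
    fix a b assume "a < dim_row (1\<^sub>m d)" "b < dim_col (1\<^sub>m d)"
    then have ab: "a < d" "b < d" by auto
    have "(F * adj F) $$ (a,b) = (\<Sum>c<d. F $$ (a,c) * cnj (F $$ (b,c)))"
    proof -
      have "(F * adj F) $$ (a,b) = (\<Sum>c<d. F $$ (a,c) * adj F $$ (c,b))"
        by (rule mm_sum[OF F adj_carrier[OF F] ab])
      also have "\<dots> = (\<Sum>c<d. F $$ (a,c) * cnj (F $$ (b,c)))"
        using F ab by (intro sum.cong refl) simp
      finally show ?thesis .
    qed
    also have "\<dots> = (\<Sum>c<d. (\<Sum>k<d. z k * u k $ a * cnj (u k $ c)) * (\<Sum>l<d. cnj (z l) * cnj (u l $ b) * u l $ c))"
      using Fe ab by (intro sum.cong refl) (simp add: mult_ac)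
    also have "\<dots> = (\<Sum>c<d. \<Sum>k<d. \<Sum>l<d. (z k * u k $ a * cnj (u k $ c)) * (cnj (z l) * cnj (u l $ b) * u l $ c))"
      by (simp only: sum_product)
    also have "\<dots> = (\<Sum>k<d. \<Sum>c<d. \<Sum>l<d. (z k * u k $ a * cnj (u k $ c)) * (cnj (z l) * cnj (u l $ b) * u l $ c))"
      by (rule sum.swap)
    also have "\<dots> = (\<Sum>k<d. \<Sum>l<d. \<Sum>c<d. (z k * u k $ a * cnj (u k $ c)) * (cnj (z l) * cnj (u l $ b) * u l $ c))"
      by (rule sum.cong[OF refl], rule sum.swap)
    also have "\<dots> = (\<Sum>k<d. \<Sum>l<d. z k * cnj (z l) * u k $ a * cnj (u l $ b) * (\<Sum>c<d. u l $ c * cnj (u k $ c)))"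
      by (intro sum.cong refl) (simp add: sum_distrib_left mult_ac)
    also have "\<dots> = (\<Sum>k<d. \<Sum>l<d. if l = k then z k * cnj (z k) * u k $ a * cnj (u k $ b) else 0)"
    proof (intro sum.cong refl)
      fix k l assume "k \<in> {..<d}" "l \<in> {..<d}"
      then show "z k * cnj (z l) * u k $ a * cnj (u l $ b) * (\<Sum>c<d. u l $ c * cnj (u k $ c)) =
         (if l = k then z k * cnj (z k) * u k $ a * cnj (u k $ b) else 0)"
        using uo[of k l] by simp
    qed
    also have "\<dots> = (\<Sum>k<d. u k $ a * cnj (u k $ b))"
    proof (intro sum.cong refl)
      fix k assume "k \<in> {..<d}"
      then have "z k * cnj (z k) = 1" using z by simp
      then show "(\<Sum>l<d. if l = k then z k * cnj (z k) * u k $ a * cnj (u k $ b) else 0) = u k $ a * cnj (u k $ b)"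
        using \<open>k \<in> {..<d}\<close> by (simp add: sum.delta)
    qed
    also have "\<dots> = 1\<^sub>m d $$ (a,b)" using onb_complete[OF u ab] ab by simp
    finally show "(F * adj F) $$ (a,b) = 1\<^sub>m d $$ (a,b)" .
  qed (use F in auto)
  moreover have "adj F * F = 1\<^sub>m d"
    using mat_mult_left_right_inverse[OF F adj_carrier[OF F] FF] .
  ultimately show ?thesis by simp
qed

lemma re_term_bound:
  fixes a y :: complex and c :: real
  shows "\<bar>Re (cnj a * (- \<i>) * (y + complex_of_real c * a))\<bar> \<le> cmod a * cmod y"
proof -
  have e: "cnj a * a = complex_of_real ((cmod a)^2)" by (metis complex_norm_square mult.commute)
  have "cnj a * (- \<i>) * (y + complex_of_real c * a) = cnj a * (- \<i>) * y + (- \<i>) * (complex_of_real c * (cnj a * a))"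
    by (simp add: algebra_simps)
  then have "Re (cnj a * (- \<i>) * (y + complex_of_real c * a)) = Re (cnj a * (- \<i>) * y)"
    unfolding e by simp
  also have "\<bar>Re (cnj a * (- \<i>) * y)\<bar> \<le> cmod (cnj a * (- \<i>) * y)" by (rule abs_Re_le_cmod)
  also have "\<dots> = cmod a * cmod y" by (simp add: norm_mult)
  finally show ?thesis .
qed

lemma fisher_core:
  fixes lam :: "nat \<Rightarrow> real" and a y :: "nat \<Rightarrow> nat \<Rightarrow> complex" and p p' :: "nat \<Rightarrow> real"
  assumes lam: "\<forall>k<d. lam k \<ge> 0" "(\<Sum>k<d. lam k) = 1"
    and ya: "\<forall>k<d. (\<Sum>j<d. (cmod (y k j))^2) \<le> R^2 * (\<Sum>j<d. (cmod (a k j))^2)"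
    and an: "\<forall>k<d. (\<Sum>j<d. (cmod (a k j))^2) = 1"
    and J: "J \<subseteq> {..<d}" "\<forall>j\<in>J. p j > 0"
    and p: "\<forall>j\<in>J. p j = (\<Sum>k<d. lam k * (cmod (a k j))^2)"
    and p': "\<forall>j\<in>J. p' j = (\<Sum>k<d. lam k * (2 * Re (cnj (a k j) * (- \<i>) * (y k j + complex_of_real c * a k j))))"
  shows "(\<Sum>j\<in>J. p j * (p' j / p j)^2) \<le> 4 * R^2"
proof -
  define B where "B j = (\<Sum>k<d. lam k * (cmod (y k j))^2)" for j
  have B0: "B j \<ge> 0" for j using lam(1) by (auto simp: B_def intro!: sum_nonneg)
  have step: "p j * (p' j / p j)^2 \<le> 4 * B j" if j: "j \<in> J" for j
  proof -
    have pj: "p j > 0" using J j by auto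
    have "\<bar>p' j\<bar> \<le> (\<Sum>k<d. lam k * (2 * (cmod (a k j) * cmod (y k j))))"
      unfolding p'[rule_format, OF j]
    proof (rule order_trans[OF sum_abs], intro sum_mono)
      fix k assume "k \<in> {..<d}"
      then have "lam k \<ge> 0" using lam by simp
      then show "\<bar>lam k * (2 * Re (cnj (a k j) * (- \<i>) * (y k j + complex_of_real c * a k j)))\<bar>
           \<le> lam k * (2 * (cmod (a k j) * cmod (y k j)))"
        using re_term_bound[of "a k j" "y k j" c] by (simp add: abs_mult mult_left_mono)
    qed
    also have "\<dots> = 2 * (\<Sum>k<d. \<bar>sqrt (lam k) * cmod (a k j)\<bar> * \<bar>sqrt (lam k) * cmod (y k j)\<bar>)"
    proof -
      have "(\<Sum>k<d. lam k * (2 * (cmod (a k j) * cmod (y k j)))) =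
            (\<Sum>k<d. 2 * (\<bar>sqrt (lam k) * cmod (a k j)\<bar> * \<bar>sqrt (lam k) * cmod (y k j)\<bar>))"
      proof (intro sum.cong refl)
        fix k assume "k \<in> {..<d}"
        then have l: "lam k \<ge> 0" using lam(1) by simp
        have "\<bar>sqrt (lam k) * cmod (a k j)\<bar> * \<bar>sqrt (lam k) * cmod (y k j)\<bar>
             = (sqrt (lam k) * sqrt (lam k)) * (cmod (a k j) * cmod (y k j))"
          by (simp add: abs_mult mult_ac)
        also have "sqrt (lam k) * sqrt (lam k) = lam k" using l by simp
        finally show "lam k * (2 * (cmod (a k j) * cmod (y k j))) =
            2 * (\<bar>sqrt (lam k) * cmod (a k j)\<bar> * \<bar>sqrt (lam k) * cmod (y k j)\<bar>)" by simp
      qed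
      then show ?thesis by (simp add: sum_distrib_left)
    qed
    also have "\<dots> \<le> 2 * (L2_set (\<lambda>k. sqrt (lam k) * cmod (a k j)) {..<d} * L2_set (\<lambda>k. sqrt (lam k) * cmod (y k j)) {..<d})"
      by (simp add: L2_set_mult_ineq)
    also have "L2_set (\<lambda>k. sqrt (lam k) * cmod (a k j)) {..<d} = sqrt (p j)"
      unfolding L2_set_def p[rule_format, OF j] using lam(1)
      by (intro arg_cong[where f=sqrt] sum.cong refl) (simp add: power_mult_distrib)
    also have "L2_set (\<lambda>k. sqrt (lam k) * cmod (y k j)) {..<d} = sqrt (B j)"
      unfolding L2_set_def B_def using lam(1)
      by (intro arg_cong[where f=sqrt] sum.cong refl) (simp add: power_mult_distrib)
    finally have pb: "\<bar>p' j\<bar> \<le> 2 * (sqrt (p j) * sqrt (B j))" .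
    have "(p' j)^2 = \<bar>p' j\<bar>^2" by simp
    also have "\<dots> \<le> (2 * (sqrt (p j) * sqrt (B j)))^2"
      by (rule power_mono[OF pb]) simp
    also have "\<dots> = 4 * p j * B j" using pj B0[of j] by (simp add: power_mult_distrib)
    finally have "(p' j)^2 \<le> 4 * p j * B j" .
    moreover have "p j * (p' j / p j)^2 = (p' j)^2 / p j" using pj by (simp add: power2_eq_square)
    ultimately show ?thesis using pj by (simp add: divide_le_eq mult_ac)
  qed
  have "(\<Sum>j\<in>J. p j * (p' j / p j)^2) \<le> (\<Sum>j\<in>J. 4 * B j)" by (rule sum_mono[OF step])
  also have "\<dots> \<le> (\<Sum>j<d. 4 * B j)"
    by (rule sum_mono2) (use J B0 in auto)
  also have "\<dots> = 4 * (\<Sum>j<d. \<Sum>k<d. lam k * (cmod (y k j))^2)"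
    unfolding B_def by (simp add: sum_distrib_left)
  also have "\<dots> = 4 * (\<Sum>k<d. \<Sum>j<d. lam k * (cmod (y k j))^2)"
    by (rule arg_cong[where f="\<lambda>x. 4 * x"], rule sum.swap)
  also have "\<dots> = 4 * (\<Sum>k<d. lam k * (\<Sum>j<d. (cmod (y k j))^2))"
    by (simp add: sum_distrib_left)
  also have "\<dots> \<le> 4 * (\<Sum>k<d. lam k * R^2)"
  proof -
    have "(\<Sum>k<d. lam k * (\<Sum>j<d. (cmod (y k j))^2)) \<le> (\<Sum>k<d. lam k * R^2)"
    proof (rule sum_mono)
      fix k assume "k \<in> {..<d}"
      then show "lam k * (\<Sum>j<d. (cmod (y k j))^2) \<le> lam k * R^2"
        using ya an lam(1) by (intro mult_left_mono) auto
    qed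
    then show ?thesis by simp
  qed
  also have "\<dots> = 4 * R^2" using lam(2) by (simp add: sum_distrib_right[symmetric])
  finally show ?thesis .
qed

lemma row_col_sum: "(A::complex mat) \<in> carrier_mat d n \<Longrightarrow> B \<in> carrier_mat n m \<Longrightarrow> i < d \<Longrightarrow> j < m \<Longrightarrow>
   row A i \<bullet> col B j = (\<Sum>k<n. A $$ (i,k) * B $$ (k,j))"
  by (simp add: scalar_prod_def atLeast0LessThan)

lemma mtrace_comm:
  assumes A: "(A::complex mat) \<in> carrier_mat d d" and B: "B \<in> carrier_mat d d"
  shows "mtrace (A * B) = mtrace (B * A)"
proof -
  have "mtrace (A * B) = (\<Sum>i<d. \<Sum>c<d. A $$ (i,c) * B $$ (c,i))"
    unfolding mtrace_def using A B by (intro sum.cong) (auto simp: row_col_sum[OF A B])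
  also have "\<dots> = (\<Sum>c<d. \<Sum>i<d. B $$ (c,i) * A $$ (i,c))"
    by (subst sum.swap) (simp add: mult.commute)
  also have "\<dots> = mtrace (B * A)"
    unfolding mtrace_def using A B by (intro sum.cong) (auto simp: row_col_sum[OF B A])
  finally show ?thesis .
qed

lemma conj_rank1:
  assumes T: "T \<in> carrier_mat d d" and M: "M \<in> carrier_mat d d"
    and x: "\<forall>k<d. x k \<in> carrier_vec d"
    and Me: "\<forall>a<d. \<forall>b<d. M $$ (a,b) = (\<Sum>k<d. c k * x k $ a * cnj (x k $ b))"
    and ab: "a < d" "b < d"
  shows "(T * M * adj T) $$ (a,b) = (\<Sum>k<d. c k * (T *\<^sub>v x k) $ a * cnj ((T *\<^sub>v x k) $ b))"
proof -
  have TM: "T * M \<in> carrier_mat d d" using T M by simp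
  have "(T * M * adj T) $$ (a,b) = (\<Sum>g<d. (T * M) $$ (a,g) * cnj (T $$ (b,g)))"
  proof -
    have "(T * M * adj T) $$ (a,b) = (\<Sum>g<d. (T * M) $$ (a,g) * adj T $$ (g,b))"
      by (rule mm_sum[OF TM adj_carrier[OF T] ab])
    also have "\<dots> = (\<Sum>g<d. (T * M) $$ (a,g) * cnj (T $$ (b,g)))"
      using T ab by (intro sum.cong refl) simp
    finally show ?thesis .
  qed
  also have "\<dots> = (\<Sum>g<d. (\<Sum>f<d. T $$ (a,f) * (\<Sum>k<d. c k * x k $ f * cnj (x k $ g))) * cnj (T $$ (b,g)))"
  proof (rule sum.cong[OF refl])
    fix g assume "g \<in> {..<d}" then have g: "g < d" by simp
    have "(T * M) $$ (a,g) = (\<Sum>f<d. T $$ (a,f) * M $$ (f,g))" by (rule mm_sum[OF T M ab(1) g])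
    also have "\<dots> = (\<Sum>f<d. T $$ (a,f) * (\<Sum>k<d. c k * x k $ f * cnj (x k $ g)))"
      using Me g by (intro sum.cong refl) simp
    finally show "(T * M) $$ (a,g) * cnj (T $$ (b,g)) = (\<Sum>f<d. T $$ (a,f) * (\<Sum>k<d. c k * x k $ f * cnj (x k $ g))) * cnj (T $$ (b,g))" by simp
  qed
  also have "\<dots> = (\<Sum>g<d. \<Sum>f<d. \<Sum>k<d. c k * ((T $$ (a,f) * x k $ f) * (cnj (T $$ (b,g)) * cnj (x k $ g))))"
    by (simp add: sum_distrib_left sum_distrib_right mult_ac)
  also have "\<dots> = (\<Sum>f<d. \<Sum>g<d. \<Sum>k<d. c k * ((T $$ (a,f) * x k $ f) * (cnj (T $$ (b,g)) * cnj (x k $ g))))"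
    by (rule sum.swap)
  also have "\<dots> = (\<Sum>f<d. \<Sum>k<d. \<Sum>g<d. c k * ((T $$ (a,f) * x k $ f) * (cnj (T $$ (b,g)) * cnj (x k $ g))))"
    by (rule sum.cong[OF refl], rule sum.swap)
  also have "\<dots> = (\<Sum>k<d. \<Sum>f<d. \<Sum>g<d. c k * ((T $$ (a,f) * x k $ f) * (cnj (T $$ (b,g)) * cnj (x k $ g))))"
    by (rule sum.swap)
  also have "\<dots> = (\<Sum>k<d. c k * (\<Sum>f<d. T $$ (a,f) * x k $ f) * cnj (\<Sum>g<d. T $$ (b,g) * x k $ g))"
    by (simp add: sum_distrib_left sum_distrib_right mult_ac)
  also have "\<dots> = (\<Sum>k<d. c k * (T *\<^sub>v x k) $ a * cnj ((T *\<^sub>v x k) $ b))"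
  proof (rule sum.cong[OF refl])
    fix k assume "k \<in> {..<d}" then have xk: "x k \<in> carrier_vec d" using x by simp
    show "c k * (\<Sum>f<d. T $$ (a,f) * x k $ f) * cnj (\<Sum>g<d. T $$ (b,g) * x k $ g) =
          c k * (T *\<^sub>v x k) $ a * cnj ((T *\<^sub>v x k) $ b)"
      using row_dot_sum[OF T xk ab(1)] row_dot_sum[OF T xk ab(2)] T ab by simp
  qed
  finally show ?thesis .
qed

lemma trace_proj:
  assumes Z: "Z \<in> carrier_mat d d" and e: "e \<in> carrier_vec d"
    and Ze: "\<forall>a<d. \<forall>b<d. Z $$ (a,b) = (\<Sum>k<d. c k * w k $ a * cnj (w k $ b))"
  shows "mtrace (Z * proj d e) = (\<Sum>k<d. c k * (\<Sum>a<d. w k $ a * cnj (e $ a)) * cnj (\<Sum>a<d. w k $ a * cnj (e $ a)))"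
proof -
  have P: "proj d e \<in> carrier_mat d d" by (simp add: proj_def)
  have "mtrace (Z * proj d e) = (\<Sum>a<d. \<Sum>b<d. Z $$ (a,b) * (e $ b * cnj (e $ a)))"
  proof -
    have "mtrace (Z * proj d e) = (\<Sum>a<d. (Z * proj d e) $$ (a,a))" using Z by (simp add: mtrace_def)
    also have "\<dots> = (\<Sum>a<d. \<Sum>b<d. Z $$ (a,b) * (e $ b * cnj (e $ a)))"
    proof (rule sum.cong[OF refl])
      fix a assume "a \<in> {..<d}" then have a: "a < d" by simp
      have "(Z * proj d e) $$ (a,a) = (\<Sum>b<d. Z $$ (a,b) * proj d e $$ (b,a))" by (rule mm_sum[OF Z P a a])
      also have "\<dots> = (\<Sum>b<d. Z $$ (a,b) * (e $ b * cnj (e $ a)))"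
        using a by (intro sum.cong refl) (simp add: proj_def)
      finally show "(Z * proj d e) $$ (a,a) = (\<Sum>b<d. Z $$ (a,b) * (e $ b * cnj (e $ a)))" .
    qed
    finally show ?thesis .
  qed
  also have "\<dots> = (\<Sum>a<d. \<Sum>b<d. \<Sum>k<d. c k * ((w k $ a * cnj (e $ a)) * (cnj (w k $ b) * e $ b)))"
    using Ze by (intro sum.cong refl) (simp add: sum_distrib_left sum_distrib_right mult_ac)
  also have "\<dots> = (\<Sum>a<d. \<Sum>k<d. \<Sum>b<d. c k * ((w k $ a * cnj (e $ a)) * (cnj (w k $ b) * e $ b)))"
    by (rule sum.cong[OF refl], rule sum.swap)
  also have "\<dots> = (\<Sum>k<d. \<Sum>a<d. \<Sum>b<d. c k * ((w k $ a * cnj (e $ a)) * (cnj (w k $ b) * e $ b)))"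
    by (rule sum.swap)
  also have "\<dots> = (\<Sum>k<d. c k * (\<Sum>a<d. w k $ a * cnj (e $ a)) * cnj (\<Sum>a<d. w k $ a * cnj (e $ a)))"
    by (simp add: sum_distrib_left sum_distrib_right mult_ac)
  finally show ?thesis .
qed

lemma prob_formula:
  assumes U: "U \<in> carrier_mat d d" and V: "V \<in> carrier_mat d d" and S: "S \<in> carrier_mat d d"
    and \<rho>: "\<rho> \<in> carrier_mat d d" and u: "\<forall>k<d. u k \<in> carrier_vec d"
    and \<rho>e: "\<forall>a<d. \<forall>b<d. \<rho> $$ (a,b) = (\<Sum>k<d. complex_of_real (lam k) * u k $ a * cnj (u k $ b))"
    and e: "e \<in> carrier_vec d" and j: "j < d" and Se: "\<forall>a<d. S $$ (j,a) = cnj (e $ a)"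
  shows "Re (mtrace (U * \<rho> * adj U * adj V * proj d e * V)) =
    (\<Sum>k<d. lam k * (cmod ((S *\<^sub>v (V *\<^sub>v (U *\<^sub>v u k))) $ j))^2)"
proof -
  define X where "X = U * \<rho> * adj U"
  have X: "X \<in> carrier_mat d d" unfolding X_def
    by (rule mult_carrier_mat[OF mult_carrier_mat[OF U \<rho>] adj_carrier[OF U]])
  have P: "proj d e \<in> carrier_mat d d" by (simp add: proj_def)
  have Uu: "\<forall>k<d. U *\<^sub>v u k \<in> carrier_vec d" using U u by simp
  have Xe: "\<forall>a<d. \<forall>b<d. X $$ (a,b) = (\<Sum>k<d. complex_of_real (lam k) * (U *\<^sub>v u k) $ a * cnj ((U *\<^sub>v u k) $ b))"
    unfolding X_def using conj_rank1[OF U \<rho> u \<rho>e] by blast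
  define Z where "Z = V * X * adj V"
  have Z: "Z \<in> carrier_mat d d" unfolding Z_def
    by (rule mult_carrier_mat[OF mult_carrier_mat[OF V X] adj_carrier[OF V]])
  have Ze: "\<forall>a<d. \<forall>b<d. Z $$ (a,b) = (\<Sum>k<d. complex_of_real (lam k) * (V *\<^sub>v (U *\<^sub>v u k)) $ a * cnj ((V *\<^sub>v (U *\<^sub>v u k)) $ b))"
    unfolding Z_def using conj_rank1[OF V X Uu Xe] by blast
  have "mtrace (X * adj V * proj d e * V) = mtrace (V * (X * adj V * proj d e))"
    by (rule mtrace_comm) (use X V P in auto)
  also have "V * (X * adj V * proj d e) = Z * proj d e"
    unfolding Z_def using X V P by (simp add: assoc_mult_mat[of _ d d _ d _ d])
  finally have tr: "mtrace (X * adj V * proj d e * V) = mtrace (Z * proj d e)" .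
  define w where "w k = V *\<^sub>v (U *\<^sub>v u k)" for k
  have q: "(\<Sum>a<d. w k $ a * cnj (e $ a)) = (S *\<^sub>v w k) $ j" if k: "k < d" for k
  proof -
    have wk: "w k \<in> carrier_vec d" using V U u k by (simp add: w_def)
    show ?thesis using row_dot_sum[OF S wk j] S j Se by (simp add: mult.commute)
  qed
  have "mtrace (Z * proj d e) = (\<Sum>k<d. complex_of_real (lam k) * (\<Sum>a<d. w k $ a * cnj (e $ a)) * cnj (\<Sum>a<d. w k $ a * cnj (e $ a)))"
    by (rule trace_proj[OF Z e]) (use Ze in \<open>simp add: w_def\<close>)
  also have "\<dots> = (\<Sum>k<d. complex_of_real (lam k * (cmod ((S *\<^sub>v w k) $ j))^2))"
  proof (rule sum.cong[OF refl])
    fix k assume "k \<in> {..<d}"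
    then show "complex_of_real (lam k) * (\<Sum>a<d. w k $ a * cnj (e $ a)) * cnj (\<Sum>a<d. w k $ a * cnj (e $ a)) =
      complex_of_real (lam k * (cmod ((S *\<^sub>v w k) $ j))^2)"
      using q[of k] complex_norm_square[of "(S *\<^sub>v w k) $ j"] by (simp add: mult.assoc)
  qed
  finally have "mtrace (X * adj V * proj d e * V) = complex_of_real (\<Sum>k<d. lam k * (cmod ((S *\<^sub>v w k) $ j))^2)"
    unfolding tr by (simp only: of_real_sum)
  then show ?thesis unfolding X_def w_def by simp
qed

lemma Smat_carrier[simp]: "Smat d e y \<in> carrier_mat d d"
  by (simp add: Smat_def)

lemma Smat_dims[simp]: "dim_row (Smat d e y) = d" "dim_col (Smat d e y) = d"
  by (simp_all add: Smat_def)

lemma Smat_index: "j < d \<Longrightarrow> k < d \<Longrightarrow> Smat d e y $$ (j,k) = cnj (e j y $ k)"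
  by (simp add: Smat_def)

lemma Smat_unitary:
  assumes u: "onb d (\<lambda>j. e j y)"
  shows "Smat d e y * adj (Smat d e y) = 1\<^sub>m d \<and> adj (Smat d e y) * Smat d e y = 1\<^sub>m d"
proof -
  define S where "S = Smat d e y"
  have S: "S \<in> carrier_mat d d" by (simp add: S_def)
  have uc: "\<And>l. l < d \<Longrightarrow> e l y \<in> carrier_vec d" using u by (simp add: onb_def)
  have SS: "S * adj S = 1\<^sub>m d"
  proof (rule eq_matI)
    fix j k assume "j < dim_row (1\<^sub>m d)" "k < dim_col (1\<^sub>m d)"
    then have jk: "j < d" "k < d" by auto
    have "(S * adj S) $$ (j,k) = (\<Sum>a<d. S $$ (j,a) * adj S $$ (a,k))"
      by (rule mm_sum[OF S adj_carrier[OF S] jk])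
    also have "\<dots> = (\<Sum>a<d. e k y $ a * cnj (e j y $ a))"
      using jk S by (intro sum.cong refl) (simp add: S_def Smat_index mult.commute)
    also have "\<dots> = e k y \<bullet>c e j y" using cs_sum[OF uc[OF jk(1)]] by simp
    also have "\<dots> = 1\<^sub>m d $$ (j,k)" using u jk by (auto simp: onb_def)
    finally show "(S * adj S) $$ (j,k) = 1\<^sub>m d $$ (j,k)" .
  qed (use S in auto)
  moreover have "adj S * S = 1\<^sub>m d"
    using mat_mult_left_right_inverse[OF S adj_carrier[OF S] SS] .
  ultimately show ?thesis by (simp add: S_def)
qed

lemma evol_decomp:
  assumes A: "A \<in> carrier_mat d d" and u: "onb d u"
    and eig: "\<forall>j<d. A *\<^sub>v u j = complex_of_real (lam j) \<cdot>\<^sub>v u j"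
  shows "mat_exp ((- (\<i> * complex_of_real t)) \<cdot>\<^sub>m A) \<in> carrier_mat d d \<and>
    (\<forall>a<d. \<forall>b<d. mat_exp ((- (\<i> * complex_of_real t)) \<cdot>\<^sub>m A) $$ (a,b) =
       (\<Sum>j<d. exp (- (\<i> * complex_of_real t) * complex_of_real (lam j)) * u j $ a * cnj (u j $ b)))"
proof -
  define B where "B = (- (\<i> * complex_of_real t)) \<cdot>\<^sub>m A"
  have B: "B \<in> carrier_mat d d" using A by (simp add: B_def)
  have uc: "\<And>l. l < d \<Longrightarrow> u l \<in> carrier_vec d" using u by (simp add: onb_def)
  have eB: "\<forall>j<d. B *\<^sub>v u j = (- (\<i> * complex_of_real t) * complex_of_real (lam j)) \<cdot>\<^sub>v u j"
  proof (intro allI impI)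
    fix j assume j: "j < d"
    have "B *\<^sub>v u j = (- (\<i> * complex_of_real t)) \<cdot>\<^sub>v (A *\<^sub>v u j)"
      unfolding B_def by (rule smult_mat_vec[OF A uc[OF j]])
    also have "\<dots> = (- (\<i> * complex_of_real t) * complex_of_real (lam j)) \<cdot>\<^sub>v u j"
      using eig j uc[OF j] by (intro eq_vecI) auto
    finally show "B *\<^sub>v u j = (- (\<i> * complex_of_real t) * complex_of_real (lam j)) \<cdot>\<^sub>v u j" .
  qed
  have "mat_exp B \<in> carrier_mat d d" using B by (simp add: mat_exp_def)
  moreover have "\<forall>a<d. \<forall>b<d. mat_exp B $$ (a,b) =
       (\<Sum>j<d. exp (- (\<i> * complex_of_real t) * complex_of_real (lam j)) * u j $ a * cnj (u j $ b))"
    using mat_exp_decomp[OF B u eB] by blast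
  ultimately show ?thesis by (simp add: B_def)
qed

lemma exp_imag_unit:
  "exp (- (\<i> * complex_of_real t) * complex_of_real l) * cnj (exp (- (\<i> * complex_of_real t) * complex_of_real l)) = 1"
proof -
  have "cmod (exp (- (\<i> * complex_of_real t) * complex_of_real l)) = 1" by simp
  then show ?thesis using complex_norm_square[of "exp (- (\<i> * complex_of_real t) * complex_of_real l)"] by simp
qed

lemma E_formula:
  assumes H: "H0 \<in> carrier_mat d d" and ec: "v \<in> carrier_vec d" and vv: "v \<bullet>c v = 1"
    and eig: "H0 *\<^sub>v v = complex_of_real l \<cdot>\<^sub>v v"
  shows "complex_of_real l = (\<Sum>a<d. \<Sum>b<d. H0 $$ (a,b) * v $ b * cnj (v $ a))"
proof -
  have "(H0 *\<^sub>v v) \<bullet>c v = complex_of_real l * (v \<bullet>c v)"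
    unfolding eig by (rule cs_smult_left[OF ec ec])
  then have "complex_of_real l = (H0 *\<^sub>v v) \<bullet>c v" using vv by simp
  also have "\<dots> = (\<Sum>a<d. (H0 *\<^sub>v v) $ a * cnj (v $ a))" by (rule cs_sum[OF ec])
  also have "\<dots> = (\<Sum>a<d. \<Sum>b<d. H0 $$ (a,b) * v $ b * cnj (v $ a))"
    using H ec by (intro sum.cong refl) (simp add: row_dot_sum sum_distrib_right)
  finally show ?thesis .
qed

lemma exp_differentiable: "exp differentiable (at (z::complex))"
  unfolding differentiable_def using DERIV_exp[of z] has_field_derivative_def by blast

lemma cnj_differentiable: "cnj differentiable (at (z::complex))"
  using bounded_linear_cnj bounded_linear_imp_differentiable by blast

lemma diff_cnj: "f differentiable (at (x::real)) \<Longrightarrow> (\<lambda>y. cnj (f y)) differentiable (at x)"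
  using differentiable_compose[OF cnj_differentiable] by blast

lemma diff_exp: "(f :: real \<Rightarrow> complex) differentiable (at x) \<Longrightarrow> (\<lambda>y. exp (f y)) differentiable (at x)"
  using differentiable_compose[OF exp_differentiable] by blast

lemma diff_transfer:
  assumes "f differentiable (at (x::real))" "open X" "x \<in> X" "\<And>y. y \<in> X \<Longrightarrow> f y = (g y :: complex)"
  shows "g differentiable (at x)"
proof -
  have "(f has_vector_derivative vector_derivative f (at x)) (at x)"
    using assms(1) vector_derivative_works by blast
  then have "(g has_vector_derivative vector_derivative f (at x)) (at x)"
    by (rule has_vector_derivative_transform_within_open[OF _ assms(2,3)]) (use assms(4) in auto)
  then show ?thesis by (rule differentiableI_vector)
qed

lemma deriv_rel:
  assumes F: "F \<in> carrier_mat d d" and F': "F' \<in> carrier_mat d d" and FF: "adj F * F = 1\<^sub>m d"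
    and w: "w \<in> carrier_vec d"
  shows "F' *\<^sub>v w = (- \<i>) \<cdot>\<^sub>v ((\<i> \<cdot>\<^sub>m (F' * adj F)) *\<^sub>v (F *\<^sub>v w))"
proof -
  have "(\<i> \<cdot>\<^sub>m (F' * adj F)) * F = \<i> \<cdot>\<^sub>m (F' * adj F * F)"
    by (rule mult_smult_assoc_mat[OF mult_carrier_mat[OF F' adj_carrier[OF F]] F])
  also have "F' * adj F * F = F' * (adj F * F)"
    by (rule assoc_mult_mat[OF F' adj_carrier[OF F] F])
  also have "\<dots> = F'" using FF F' by simp
  finally have e: "(\<i> \<cdot>\<^sub>m (F' * adj F)) * F = \<i> \<cdot>\<^sub>m F'" .
  have "(\<i> \<cdot>\<^sub>m (F' * adj F)) *\<^sub>v (F *\<^sub>v w) = ((\<i> \<cdot>\<^sub>m (F' * adj F)) * F) *\<^sub>v w"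
    by (rule assoc_mult_mat_vec[symmetric]) (use F F' w in auto)
  also have "\<dots> = \<i> \<cdot>\<^sub>v (F' *\<^sub>v w)" unfolding e by (rule smult_mat_vec[OF F' w])
  finally show ?thesis using F' w by (intro eq_vecI) auto
qed

lemma re_pair: "Re (a * cnj b + b * cnj a) = 2 * Re (cnj a * b)"
  by (simp add: algebra_simps)

lemma N2_smult_cs: "v \<in> carrier_vec d \<Longrightarrow> v \<bullet>c v = 1 \<Longrightarrow> N2 d v = 1"
proof -
  assume v: "v \<in> carrier_vec d" "v \<bullet>c v = 1"
  have "complex_of_real (N2 d v) = 1" using cs_self[OF v(1)] v(2) by (simp only: N2_def)
  then show ?thesis by (simp only: of_real_eq_1_iff)
qed

theorem proposition1:
  fixes d :: nat and \<Xi> :: "real set" and H :: "real \<Rightarrow> complex mat"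
    and E :: "nat \<Rightarrow> real \<Rightarrow> real" and e :: "nat \<Rightarrow> real \<Rightarrow> complex vec"
    and t \<xi> :: real
  assumes "open \<Xi>" and "\<xi> \<in> \<Xi>"
    and herm: "\<forall>x\<in>\<Xi>. hermitian_mat d (H x)"
    and H_diff: "\<forall>x\<in>\<Xi>. \<forall>i<d. \<forall>j<d. (\<lambda>y. H y $$ (i,j)) differentiable (at x)"
    and eigvec: "\<forall>x\<in>\<Xi>. \<forall>j<d. e j x \<in> carrier_vec d \<and> H x *\<^sub>v e j x = of_real (E j x) \<cdot>\<^sub>v e j x"
    and orthonormal: "\<forall>x\<in>\<Xi>. \<forall>j<d. \<forall>k<d. e j x \<bullet>c e k x = (if j = k then 1 else 0)"
    and nondeg_sorted: "\<forall>x\<in>\<Xi>. \<forall>j k. j < k \<and> k < d \<longrightarrow> E j x < E k x"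
    and e_diff: "\<forall>x\<in>\<Xi>. \<forall>j<d. \<forall>k<d. (\<lambda>y. e j y $ k) differentiable (at x)"
  shows "\<forall>\<rho>0 V. density_mat d \<rho>0 \<and> unitary_mat d V \<longrightarrow>
           fisher_info d H e t \<rho>0 V \<xi>
             \<le> (spectral_gap (gU d H t \<xi>) + spectral_gap (gS d e \<xi>))^2"
proof (intro allI impI)
  fix \<rho>0 V assume dv: "density_mat d \<rho>0 \<and> unitary_mat d V"
  note X = \<open>open \<Xi>\<close> \<open>\<xi> \<in> \<Xi>\<close>
  show "fisher_info d H e t \<rho>0 V \<xi> \<le> (spectral_gap (gU d H t \<xi>) + spectral_gap (gS d e \<xi>))^2"
  proof (cases "d = 0")
    case True
    then show ?thesis by (simp add: fisher_info_def)
  next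
    case False
    then have d: "0 < d" by simp
    have Vc: "V \<in> carrier_mat d d" and VV: "adj V * V = 1\<^sub>m d" using dv by (auto simp: unitary_mat_def)
    have onbE: "onb d (\<lambda>j. e j y)" if "y \<in> \<Xi>" for y
      using eigvec orthonormal that by (simp add: onb_def)
    have Hc: "H y \<in> carrier_mat d d" if "y \<in> \<Xi>" for y using herm that by (simp add: hermitian_mat_def)
    define S where "S = Smat d e"
    define U where "U = evol H t"
    have Sc: "S y \<in> carrier_mat d d" for y by (simp add: S_def)
    have Udec: "U y \<in> carrier_mat d d \<and> (\<forall>a<d. \<forall>b<d. U y $$ (a,b) =
       (\<Sum>j<d. exp (- (\<i> * complex_of_real t) * complex_of_real (E j y)) * e j y $ a * cnj (e j y $ b)))"
      if y: "y \<in> \<Xi>" for y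
      unfolding U_def evol_def
      by (rule evol_decomp[where lam="\<lambda>j. E j y", OF Hc[OF y] onbE[OF y]]) (use eigvec y in auto)
    have Uc: "U y \<in> carrier_mat d d" if "y \<in> \<Xi>" for y using Udec[OF that] by simp
    have Uunit: "U y * adj (U y) = 1\<^sub>m d \<and> adj (U y) * U y = 1\<^sub>m d" if y: "y \<in> \<Xi>" for y
      by (rule decomp_unitary[OF onbE[OF y] Uc[OF y], where z="\<lambda>j. exp (- (\<i> * complex_of_real t) * complex_of_real (E j y))"])
         (use Udec[OF y] exp_imag_unit in auto)
    have Sunit: "S y * adj (S y) = 1\<^sub>m d \<and> adj (S y) * S y = 1\<^sub>m d" if y: "y \<in> \<Xi>" for y
      unfolding S_def by (rule Smat_unitary[of d e y, OF onbE[OF y]])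
    have Sd: "mvd d S (mderiv d S \<xi>) \<xi>"
    proof (rule mvd_of_diff, intro allI impI)
      fix a b assume ab: "a < d" "b < d"
      have "(\<lambda>y. cnj (e a y $ b)) differentiable (at \<xi>)"
        by (rule diff_cnj) (use e_diff X ab in auto)
      moreover have "(\<lambda>y. S y $$ (a,b)) = (\<lambda>y. cnj (e a y $ b))"
        using ab by (simp add: S_def Smat_index)
      ultimately show "(\<lambda>y. S y $$ (a,b)) differentiable (at \<xi>)" by simp
    qed
    have Ud: "mvd d U (mderiv d U \<xi>) \<xi>"
    proof (rule mvd_of_diff, intro allI impI)
      fix a b assume ab: "a < d" "b < d"
      define Ec where "Ec j y = (\<Sum>a'<d. \<Sum>b'<d. H y $$ (a',b') * e j y $ b' * cnj (e j y $ a'))" for j y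
      have Ecd: "(Ec j) differentiable (at \<xi>)" if j: "j < d" for j
        unfolding Ec_def
        by (intro differentiable_sum ballI finite_lessThan differentiable_mult diff_cnj)
           (use H_diff e_diff X j in auto)
      have fd: "(\<lambda>y. \<Sum>j<d. exp (- (\<i> * complex_of_real t) * Ec j y) * e j y $ a * cnj (e j y $ b)) differentiable (at \<xi>)"
        by (intro differentiable_sum ballI finite_lessThan differentiable_mult diff_exp diff_cnj differentiable_const Ecd)
           (use e_diff X ab in auto)
      show "(\<lambda>y. U y $$ (a,b)) differentiable (at \<xi>)"
      proof (rule diff_transfer[OF fd X])
        fix y assume y: "y \<in> \<Xi>"
        have "Ec j y = complex_of_real (E j y)" if j: "j < d" for j
          unfolding Ec_def
          by (rule E_formula[OF Hc[OF y], symmetric]) (use eigvec orthonormal y j in auto)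
        then show "(\<Sum>j<d. exp (- (\<i> * complex_of_real t) * Ec j y) * e j y $ a * cnj (e j y $ b)) = U y $$ (a,b)"
          using Udec[OF y] ab by simp
      qed
    qed
    define Sx where "Sx = S \<xi>"
    define Ux where "Ux = U \<xi>"
    define S' where "S' = mderiv d S \<xi>"
    define U' where "U' = mderiv d U \<xi>"
    have Sxc: "Sx \<in> carrier_mat d d" by (simp add: Sx_def Sc)
    have Uxc: "Ux \<in> carrier_mat d d" by (simp add: Ux_def Uc X)
    have S'c: "S' \<in> carrier_mat d d" by (simp add: S'_def)
    have U'c: "U' \<in> carrier_mat d d" by (simp add: U'_def)
    define gs where "gs = gS d e \<xi>"
    define gu where "gu = gU d H t \<xi>"
    have gs_eq: "gs = \<i> \<cdot>\<^sub>m (S' * adj Sx)" unfolding gs_def gS_def S'_def Sx_def S_def ..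
    have gu_eq: "gu = \<i> \<cdot>\<^sub>m (U' * adj Ux)" unfolding gu_def gU_def U'_def Ux_def U_def ..
    have hS: "hermitian_mat d gs" unfolding gs_eq Sx_def S'_def
      by (rule g_herm[OF X _ Sd]) (use Sc Sunit in auto)
    have hU: "hermitian_mat d gu" unfolding gu_eq Ux_def U'_def
      by (rule g_herm[OF X _ Ud]) (use Uc Uunit in auto)
    obtain cS where gS0: "spectral_gap gs \<ge> 0"
      and cS: "\<forall>v\<in>carrier_vec d. nrm d (gs *\<^sub>v v - complex_of_real cS \<cdot>\<^sub>v v) \<le> spectral_gap gs / 2 * nrm d v"
      using gap_bound[OF hS d] by blast
    obtain cU where gU0: "spectral_gap gu \<ge> 0"
      and cU: "\<forall>v\<in>carrier_vec d. nrm d (gu *\<^sub>v v - complex_of_real cU \<cdot>\<^sub>v v) \<le> spectral_gap gu / 2 * nrm d v"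
      using gap_bound[OF hU d] by blast
    have SxS: "adj Sx * Sx = 1\<^sub>m d" using Sunit X by (simp add: Sx_def)
    have UxU: "adj Ux * Ux = 1\<^sub>m d" using Uunit X by (simp add: Ux_def)
    have S'rel: "S' *\<^sub>v w = (- \<i>) \<cdot>\<^sub>v (gs *\<^sub>v (Sx *\<^sub>v w))" if "w \<in> carrier_vec d" for w
      unfolding gs_eq by (rule deriv_rel[OF Sxc S'c SxS that])
    have U'rel: "U' *\<^sub>v w = (- \<i>) \<cdot>\<^sub>v (gu *\<^sub>v (Ux *\<^sub>v w))" if "w \<in> carrier_vec d" for w
      unfolding gu_eq by (rule deriv_rel[OF Uxc U'c UxU that])
    obtain u lam where u: "onb d u" and lam0: "\<forall>k<d. lam k \<ge> 0" and lam1: "(\<Sum>k<d. lam k) = 1"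
      and \<rho>e: "\<forall>a<d. \<forall>b<d. \<rho>0 $$ (a,b) = (\<Sum>k<d. complex_of_real (lam k) * u k $ a * cnj (u k $ b))"
      using density_decomp[of d \<rho>0] dv by blast
    have uc: "\<forall>k<d. u k \<in> carrier_vec d" using u by (simp add: onb_def)
    have uu: "\<forall>k<d. u k \<bullet>c u k = 1" using u by (simp add: onb_def)
    have \<rho>c: "\<rho>0 \<in> carrier_mat d d" using dv by (simp add: density_mat_def hermitian_mat_def)
    define R where "R y = S y * V * U y" for y
    define R' where "R' = S' * V * Ux + Sx * V * U'"
    have Rd: "mvd d R R' \<xi>"
    proof -
      have d1: "mvd d (\<lambda>y. S y * V) (S' * V + S \<xi> * 0\<^sub>m d d) \<xi>"
        by (rule mvd_mult[OF X]) (use Sc Vc S'c Sd mvd_const[of d V \<xi>] in \<open>auto simp: S'_def\<close>)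
      have d2: "mvd d (\<lambda>y. (S y * V) * U y) ((S' * V + S \<xi> * 0\<^sub>m d d) * U \<xi> + (S \<xi> * V) * U') \<xi>"
        by (rule mvd_mult[OF X _ _ U'c d1]) (use Sc Vc S'c Uc Ud in \<open>auto simp: U'_def intro!: mult_carrier_mat add_carrier_mat zero_carrier_mat\<close>)
      have z1: "S \<xi> * 0\<^sub>m d d = 0\<^sub>m d d" by (rule right_mult_zero_mat[OF Sc])
      have z2: "S' * V + 0\<^sub>m d d = S' * V" by (rule right_add_zero_mat[OF mult_carrier_mat[OF S'c Vc]])
      have "(S' * V + S \<xi> * 0\<^sub>m d d) * U \<xi> + (S \<xi> * V) * U' = R'"
        unfolding z1 z2 by (simp add: R'_def Sx_def Ux_def)
      moreover have "R = (\<lambda>y. S y * V * U y)" by (rule ext) (simp add: R_def)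
      ultimately show ?thesis using d2 by simp
    qed
    have gsc: "gs \<in> carrier_mat d d" using hS by (simp add: hermitian_mat_def)
    have guc: "gu \<in> carrier_mat d d" using hU by (simp add: hermitian_mat_def)
    define z where "z k = Ux *\<^sub>v u k" for k
    define a where "a k = Sx *\<^sub>v (V *\<^sub>v z k)" for k
    define a' where "a' k = R' *\<^sub>v u k" for k
    define c where "c = cS + cU"
    define yv where "yv k = (gs *\<^sub>v a k - complex_of_real cS \<cdot>\<^sub>v a k) + Sx *\<^sub>v (V *\<^sub>v (gu *\<^sub>v z k - complex_of_real cU \<cdot>\<^sub>v z k))" for k
    have zc: "z k \<in> carrier_vec d" if "k < d" for k using Uxc uc that by (simp add: z_def)
    have ac: "a k \<in> carrier_vec d" if "k < d" for k using Sxc Vc zc[OF that] by (simp add: a_def)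
    have a'eq: "a' k $ j = - \<i> * (yv k $ j + complex_of_real c * a k $ j)" if k: "k < d" and j: "j < d" for k j
    proof -
      have ukc: "u k \<in> carrier_vec d" using uc k by simp
      define w1 where "w1 = gs *\<^sub>v a k"
      define w2 where "w2 = Sx *\<^sub>v (V *\<^sub>v (gu *\<^sub>v z k))"
      have w1c: "w1 \<in> carrier_vec d" using gsc ac[OF k] by (simp add: w1_def)
      have w2c: "w2 \<in> carrier_vec d" using Sxc Vc guc zc[OF k] by (simp add: w2_def)
      have "a' k = (S' * V * Ux) *\<^sub>v u k + (Sx * V * U') *\<^sub>v u k"
        unfolding a'_def R'_def
        by (rule add_mult_distrib_mat_vec) (use S'c Vc Uxc Sxc U'c ukc in auto)
      also have "(S' * V * Ux) *\<^sub>v u k = S' *\<^sub>v (V *\<^sub>v z k)"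
        unfolding z_def
        using assoc_mult_mat_vec[OF mult_carrier_mat[OF S'c Vc] Uxc ukc] assoc_mult_mat_vec[OF S'c Vc, of "Ux *\<^sub>v u k"] Uxc ukc
        by simp
      also have "\<dots> = (- \<i>) \<cdot>\<^sub>v w1"
        using S'rel[of "V *\<^sub>v z k"] Vc zc[OF k] by (simp add: w1_def a_def)
      also have "(Sx * V * U') *\<^sub>v u k = Sx *\<^sub>v (V *\<^sub>v (U' *\<^sub>v u k))"
        using assoc_mult_mat_vec[OF mult_carrier_mat[OF Sxc Vc] U'c ukc] assoc_mult_mat_vec[OF Sxc Vc, of "U' *\<^sub>v u k"] U'c ukc
        by simp
      also have "U' *\<^sub>v u k = (- \<i>) \<cdot>\<^sub>v (gu *\<^sub>v z k)"
        using U'rel[OF ukc] by (simp add: z_def)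
      also have "Sx *\<^sub>v (V *\<^sub>v ((- \<i>) \<cdot>\<^sub>v (gu *\<^sub>v z k))) = (- \<i>) \<cdot>\<^sub>v w2"
        using Sxc Vc guc zc[OF k] by (simp add: w2_def mult_mat_vec)
      finally have a'k: "a' k = (- \<i>) \<cdot>\<^sub>v w1 + (- \<i>) \<cdot>\<^sub>v w2" .
      have sv: "Sx *\<^sub>v (V *\<^sub>v (gu *\<^sub>v z k - complex_of_real cU \<cdot>\<^sub>v z k)) = w2 - complex_of_real cU \<cdot>\<^sub>v a k"
      proof -
        have "V *\<^sub>v (gu *\<^sub>v z k - complex_of_real cU \<cdot>\<^sub>v z k) = V *\<^sub>v (gu *\<^sub>v z k) - V *\<^sub>v (complex_of_real cU \<cdot>\<^sub>v z k)"
          by (rule mult_minus_distrib_mat_vec) (use Vc guc zc[OF k] in auto)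
        also have "V *\<^sub>v (complex_of_real cU \<cdot>\<^sub>v z k) = complex_of_real cU \<cdot>\<^sub>v (V *\<^sub>v z k)"
          by (rule mult_mat_vec[OF Vc zc[OF k]])
        also have "Sx *\<^sub>v (V *\<^sub>v (gu *\<^sub>v z k) - complex_of_real cU \<cdot>\<^sub>v (V *\<^sub>v z k)) =
            Sx *\<^sub>v (V *\<^sub>v (gu *\<^sub>v z k)) - Sx *\<^sub>v (complex_of_real cU \<cdot>\<^sub>v (V *\<^sub>v z k))"
          by (rule mult_minus_distrib_mat_vec) (use Sxc Vc guc zc[OF k] in auto)
        also have "Sx *\<^sub>v (complex_of_real cU \<cdot>\<^sub>v (V *\<^sub>v z k)) = complex_of_real cU \<cdot>\<^sub>v a k"
          unfolding a_def by (rule mult_mat_vec[OF Sxc]) (use Vc zc[OF k] in auto)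
        finally show ?thesis by (simp add: w2_def)
      qed
      have "yv k $ j = w1 $ j - complex_of_real cS * a k $ j + (w2 $ j - complex_of_real cU * a k $ j)"
        unfolding yv_def sv w1_def[symmetric] using j w1c w2c ac[OF k] by simp
      moreover have "a' k $ j = - \<i> * w1 $ j - \<i> * w2 $ j" unfolding a'k using j w1c w2c by simp
      ultimately show ?thesis by (simp add: c_def algebra_simps)
    qed
    have N2a: "N2 d (a k) = 1" if k: "k < d" for k
    proof -
      have ukc: "u k \<in> carrier_vec d" using uc k by simp
      have "N2 d (a k) = N2 d (V *\<^sub>v z k)" unfolding a_def
        by (rule unitary_N2[OF Sxc SxS]) (use Vc zc[OF k] in simp)
      also have "\<dots> = N2 d (z k)" by (rule unitary_N2[OF Vc VV zc[OF k]])
      also have "\<dots> = N2 d (u k)" unfolding z_def by (rule unitary_N2[OF Uxc UxU ukc])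
      also have "\<dots> = 1" using N2_smult_cs[OF ukc] uu k by simp
      finally show ?thesis .
    qed
    define Rr where "Rr = (spectral_gap gs + spectral_gap gu) / 2"
    have Rr0: "Rr \<ge> 0" using gS0 gU0 by (simp add: Rr_def)
    have N2y: "N2 d (yv k) \<le> Rr^2 * N2 d (a k)" if k: "k < d" for k
    proof -
      have nz: "nrm d (z k) = 1" using N2a[OF k] unitary_N2[OF Sxc SxS, of "V *\<^sub>v z k"] unitary_N2[OF Vc VV zc[OF k]] Vc zc[OF k]
        by (simp add: a_def nrm_def)
      have na: "nrm d (a k) = 1" using N2a[OF k] by (simp add: nrm_def)
      have c1: "gs *\<^sub>v a k - complex_of_real cS \<cdot>\<^sub>v a k \<in> carrier_vec d" using gsc ac[OF k] by simp
      have c2v: "gu *\<^sub>v z k - complex_of_real cU \<cdot>\<^sub>v z k \<in> carrier_vec d" using guc zc[OF k] by simp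
      have c2: "Sx *\<^sub>v (V *\<^sub>v (gu *\<^sub>v z k - complex_of_real cU \<cdot>\<^sub>v z k)) \<in> carrier_vec d"
        using Sxc Vc c2v by simp
      have "nrm d (yv k) \<le> nrm d (gs *\<^sub>v a k - complex_of_real cS \<cdot>\<^sub>v a k) + nrm d (Sx *\<^sub>v (V *\<^sub>v (gu *\<^sub>v z k - complex_of_real cU \<cdot>\<^sub>v z k)))"
        unfolding yv_def by (rule nrm_add[OF c1 c2])
      also have "nrm d (Sx *\<^sub>v (V *\<^sub>v (gu *\<^sub>v z k - complex_of_real cU \<cdot>\<^sub>v z k))) = nrm d (gu *\<^sub>v z k - complex_of_real cU \<cdot>\<^sub>v z k)"
        using unitary_nrm[OF Sxc SxS, of "V *\<^sub>v (gu *\<^sub>v z k - complex_of_real cU \<cdot>\<^sub>v z k)"] unitary_nrm[OF Vc VV c2v] Vc c2v by simp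
      also have "nrm d (gs *\<^sub>v a k - complex_of_real cS \<cdot>\<^sub>v a k) \<le> spectral_gap gs / 2 * nrm d (a k)"
        using cS ac[OF k] by blast
      also have "nrm d (gu *\<^sub>v z k - complex_of_real cU \<cdot>\<^sub>v z k) \<le> spectral_gap gu / 2 * nrm d (z k)"
        using cU zc[OF k] by blast
      finally have "nrm d (yv k) \<le> Rr" using na nz by (simp add: Rr_def field_simps)
      then have "(nrm d (yv k))^2 \<le> Rr^2" by (rule power_mono) (simp add: nrm_nonneg)
      then show ?thesis using N2a[OF k] by (simp add: nrm_sq)
    qed
    have Rc: "R y \<in> carrier_mat d d" if "y \<in> \<Xi>" for y
      unfolding R_def by (rule mult_carrier_mat[OF mult_carrier_mat[OF Sc Vc] Uc[OF that]])
    define F where "F k j y = (\<Sum>b<d. R y $$ (j,b) * u k $ b)" for k j y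
    have FR: "F k j y = (S y *\<^sub>v (V *\<^sub>v (U y *\<^sub>v u k))) $ j" if y: "y \<in> \<Xi>" and k: "k < d" and j: "j < d" for k j y
    proof -
      have ukc: "u k \<in> carrier_vec d" using uc k by simp
      have "F k j y = (R y *\<^sub>v u k) $ j"
        using row_dot_sum[OF Rc[OF y] ukc j] Rc[OF y] j by (simp add: F_def)
      also have "R y *\<^sub>v u k = S y *\<^sub>v (V *\<^sub>v (U y *\<^sub>v u k))"
        unfolding R_def
        using assoc_mult_mat_vec[OF mult_carrier_mat[OF Sc Vc] Uc[OF y] ukc] assoc_mult_mat_vec[OF Sc Vc, of "U y *\<^sub>v u k"] Uc[OF y] ukc
        by simp
      finally show ?thesis .
    qed
    have Fxi: "F k j \<xi> = a k $ j" if k: "k < d" and j: "j < d" for k j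
      using FR[OF X(2) k j] by (simp add: a_def z_def Sx_def Ux_def)
    have Fd: "((F k j) has_vector_derivative a' k $ j) (at \<xi>)" if k: "k < d" and j: "j < d" for k j
    proof -
      have ukc: "u k \<in> carrier_vec d" using uc k by simp
      have "((\<lambda>y. \<Sum>b<d. R y $$ (j,b) * u k $ b) has_vector_derivative (\<Sum>b<d. R' $$ (j,b) * u k $ b)) (at \<xi>)"
      proof (rule has_vector_derivative_sum)
        fix b assume "b \<in> {..<d}"
        then have b: "b < d" by simp
        have "((\<lambda>y. R y $$ (j,b)) has_vector_derivative R' $$ (j,b)) (at \<xi>)" using Rd j b by (simp add: mvd_def)
        then show "((\<lambda>y. R y $$ (j,b) * u k $ b) has_vector_derivative R' $$ (j,b) * u k $ b) (at \<xi>)"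
          by (rule has_vector_derivative_mult_left)
      qed
      moreover have "(\<Sum>b<d. R' $$ (j,b) * u k $ b) = a' k $ j"
        unfolding a'_def using row_dot_sum[OF _ ukc j, of R'] j R'_def S'c Vc Uxc Sxc U'c
        by (simp add: R'_def)
      ultimately show ?thesis by (simp add: F_def[abs_def])
    qed
    define p where "p j y = outcome_prob d H e t \<rho>0 V j y" for j y
    have pform: "p j y = (\<Sum>k<d. lam k * (cmod (F k j y))^2)" if y: "y \<in> \<Xi>" and j: "j < d" for j y
    proof -
      have ec: "e j y \<in> carrier_vec d" using eigvec y j by simp
      have Se: "\<forall>a<d. S y $$ (j,a) = cnj (e j y $ a)" using j by (simp add: S_def Smat_index)
      have "p j y = (\<Sum>k<d. lam k * (cmod ((S y *\<^sub>v (V *\<^sub>v (U y *\<^sub>v u k))) $ j))^2)"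
        unfolding p_def outcome_prob_def U_def[symmetric]
        by (rule prob_formula[OF Uc[OF y] Vc Sc \<rho>c uc \<rho>e ec j Se])
      also have "\<dots> = (\<Sum>k<d. lam k * (cmod (F k j y))^2)"
        using FR[OF y _ j] by (intro sum.cong refl) simp
      finally show ?thesis .
    qed
    define p' where "p' j = (\<Sum>k<d. lam k * (2 * Re (cnj (a k $ j) * (- \<i>) * (yv k $ j + complex_of_real c * a k $ j))))" for j
    have pd: "DERIV (p j) \<xi> :> p' j" if j: "j < d" for j
    proof -
      have cd: "((\<lambda>y. \<Sum>k<d. complex_of_real (lam k) * (F k j y * cnj (F k j y))) has_vector_derivative
          (\<Sum>k<d. complex_of_real (lam k) * (F k j \<xi> * cnj (a' k $ j) + a' k $ j * cnj (F k j \<xi>)))) (at \<xi>)"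
      proof (rule has_vector_derivative_sum)
        fix k assume "k \<in> {..<d}"
        then have k: "k < d" by simp
        show "((\<lambda>y. complex_of_real (lam k) * (F k j y * cnj (F k j y))) has_vector_derivative
          complex_of_real (lam k) * (F k j \<xi> * cnj (a' k $ j) + a' k $ j * cnj (F k j \<xi>))) (at \<xi>)"
          by (intro has_vector_derivative_mult_right has_vector_derivative_mult has_vector_derivative_cnj Fd[OF k j])
      qed
      have rd: "((\<lambda>y. Re (\<Sum>k<d. complex_of_real (lam k) * (F k j y * cnj (F k j y)))) has_vector_derivative
          Re (\<Sum>k<d. complex_of_real (lam k) * (F k j \<xi> * cnj (a' k $ j) + a' k $ j * cnj (F k j \<xi>)))) (at \<xi>)"
        using bounded_linear.has_vector_derivative[OF bounded_linear_Re cd] by simp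
      have e1: "Re (\<Sum>k<d. complex_of_real (lam k) * (F k j y * cnj (F k j y))) = (\<Sum>k<d. lam k * (cmod (F k j y))^2)" for y
      proof -
        have "\<And>k. F k j y * cnj (F k j y) = complex_of_real ((cmod (F k j y))^2)"
          by (metis complex_norm_square)
        then show ?thesis by simp
      qed
      have e2: "Re (\<Sum>k<d. complex_of_real (lam k) * (F k j \<xi> * cnj (a' k $ j) + a' k $ j * cnj (F k j \<xi>))) = p' j"
        unfolding p'_def
      proof (simp only: Re_sum, intro sum.cong refl)
        fix k assume "k \<in> {..<d}"
        then have k: "k < d" by simp
        have "Re (complex_of_real (lam k) * (F k j \<xi> * cnj (a' k $ j) + a' k $ j * cnj (F k j \<xi>)))
            = lam k * Re (F k j \<xi> * cnj (a' k $ j) + a' k $ j * cnj (F k j \<xi>))" by simp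
        also have "Re (F k j \<xi> * cnj (a' k $ j) + a' k $ j * cnj (F k j \<xi>)) = 2 * Re (cnj (F k j \<xi>) * a' k $ j)"
          by (rule re_pair)
        also have "cnj (F k j \<xi>) * a' k $ j = cnj (a k $ j) * (- \<i>) * (yv k $ j + complex_of_real c * a k $ j)"
          using Fxi[OF k j] a'eq[OF k j] by (simp add: mult_ac)
        finally show "Re (complex_of_real (lam k) * (F k j \<xi> * cnj (a' k $ j) + a' k $ j * cnj (F k j \<xi>))) =
          lam k * (2 * Re (cnj (a k $ j) * (- \<i>) * (yv k $ j + complex_of_real c * a k $ j)))" .
      qed
      have "((\<lambda>y. \<Sum>k<d. lam k * (cmod (F k j y))^2) has_real_derivative p' j) (at \<xi>)"
        using rd unfolding e1 e2 has_real_derivative_iff_has_vector_derivative .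
      then show ?thesis
        by (rule has_field_derivative_transform_within_open[OF _ X]) (use pform j in simp)
    qed
    have lnd: "deriv (\<lambda>y. ln (p j y)) \<xi> = p' j / p j \<xi>" if j: "j < d" and pos: "p j \<xi> > 0" for j
    proof -
      have "DERIV (\<lambda>y. ln (p j y)) \<xi> :> inverse (p j \<xi>) * p' j"
        by (rule DERIV_chain2[OF DERIV_ln[OF pos] pd[OF j]])
      then show ?thesis by (simp add: DERIV_imp_deriv divide_inverse mult.commute)
    qed
    define J where "J = {j. j < d \<and> 0 < p j \<xi>}"
    have "fisher_info d H e t \<rho>0 V \<xi> = (\<Sum>j\<in>J. p j \<xi> * (p' j / p j \<xi>)^2)"
      unfolding fisher_info_def p_def[symmetric] J_def[symmetric]
      by (intro sum.cong refl) (use lnd in \<open>auto simp: J_def\<close>)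
    also have "\<dots> \<le> 4 * Rr^2"
    proof (rule fisher_core[where a="\<lambda>k j. a k $ j" and y="\<lambda>k j. yv k $ j" and c=c])
      show "\<forall>k<d. lam k \<ge> 0" by (rule lam0)
      show "(\<Sum>k<d. lam k) = 1" by (rule lam1)
      show "\<forall>k<d. (\<Sum>j<d. (cmod (yv k $ j))^2) \<le> Rr^2 * (\<Sum>j<d. (cmod (a k $ j))^2)"
        using N2y by (simp add: N2_def)
      show "\<forall>k<d. (\<Sum>j<d. (cmod (a k $ j))^2) = 1"
        using N2a by (simp add: N2_def)
      show "J \<subseteq> {..<d}" by (auto simp: J_def)
      show "\<forall>j\<in>J. p j \<xi> > 0" by (simp add: J_def)
      show "\<forall>j\<in>J. p j \<xi> = (\<Sum>k<d. lam k * (cmod (a k $ j))^2)"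
        using pform[OF X(2)] Fxi by (auto simp: J_def)
      show "\<forall>j\<in>J. p' j = (\<Sum>k<d. lam k * (2 * Re (cnj (a k $ j) * (- \<i>) * (yv k $ j + complex_of_real c * a k $ j))))"
        by (simp add: p'_def)
    qed
    also have "4 * Rr^2 = (spectral_gap (gU d H t \<xi>) + spectral_gap (gS d e \<xi>))^2"
      by (simp add: Rr_def gs_def gu_def power2_eq_square algebra_simps)
    finally show ?thesis .
  qed
qed

end
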